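(* Let $q$ be odd. If $k=2m$ is even, then $\mathfrak{g}_k(\mathbb{F}_q)$ consists of two graphs, one having exactly $\frac{(q^m-1)(q^{m-1}+1)}{q-1}$ nonlooped vertices and the other exactly $\frac{(q^m+1)(q^{m-1}-1)}{q-1}$ nonlooped vertices. If $k=2m+1$ is odd, then the (unique) graph in $\mathfrak{g}_k(\mathbb{F}_q)$ has exactly $\frac{q^{2m}-1}{q-1}$ nonlooped vertices.
   Context: For a symmetric $n\times n$ matrix $A$, the looped graph corresponding to $A$, $\Gamma(A)$, has vertex set $\{1,\dots,n\}$, an edge $ij$ ($i\neq j$) iff $a_{ij}\neq0$, and a loop at $i$ iff $a_{ii}\ne 0$. Definition of $\mathfrak{g}_k(\mathbb{F}_q)$: let $x_1,\dots,x_m$ be representatives of the classes of nonzero vectors of $\mathbb{F}_q^k$ under the relation $x\sim cx$ ($c\in\mathbb{F}_q$, $c\neq0$), and let $U=[x_1\ \cdots\ x_m]$; $\mathfrak{g}_k(\mathbb{F}_q)$ is the set of isomorphism classes of looped graphs $\Gamma(U^tBU)$ as $B$ ranges over the invertible symmetric $k\times k$ matrices over $\mathbb{F}_q$. *)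

theory Defs
  imports "Jordan_Normal_Form.Matrix"
begin

text \<open>A looped graph: vertex set together with a symmetric adjacency relation;
  a loop at i is E i i.\<close>
type_synonym lgraph = "nat set \<times> (nat \<Rightarrow> nat \<Rightarrow> bool)"

definition looped_graph_of :: "'a::zero mat \<Rightarrow> lgraph" where
  "looped_graph_of A = ({0..<dim_row A}, \<lambda>i j. A $$ (i,j) \<noteq> 0)"

definition lgraph_iso :: "lgraph \<Rightarrow> lgraph \<Rightarrow> bool" where
  "lgraph_iso G H \<longleftrightarrow> (\<exists>f. bij_betw f (fst G) (fst H) \<and>
      (\<forall>i\<in>fst G. \<forall>j\<in>fst G. snd G i j \<longleftrightarrow> snd H (f i) (f j)))"

definition nonlooped_count :: "lgraph \<Rightarrow> nat" where
  "nonlooped_count G = card {i \<in> fst G. \<not> snd G i i}"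

text \<open>xs is a list of representatives of the classes of nonzero vectors of F^k
  under x ~ c x (c nonzero): every nonzero vector is a nonzero multiple of
  exactly one entry.\<close>
definition proj_reps :: "nat \<Rightarrow> 'a::field vec list \<Rightarrow> bool" where
  "proj_reps k xs \<longleftrightarrow>
     (\<forall>x\<in>set xs. x \<in> carrier_vec k \<and> x \<noteq> 0\<^sub>v k) \<and>
     (\<forall>v\<in>carrier_vec k. v \<noteq> 0\<^sub>v k \<longrightarrow>
        (\<exists>!i. i < length xs \<and> (\<exists>c. c \<noteq> 0 \<and> v = c \<cdot>\<^sub>v (xs ! i))))"

text \<open>The graphs Gamma(U^t B U), U = [x_1 ... x_m], B invertible symmetric k x k.
  g_k is the set of isomorphism classes of these graphs.\<close>
definition gk_graphs :: "nat \<Rightarrow> 'a::field vec list \<Rightarrow> lgraph set" where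
  "gk_graphs k xs = {looped_graph_of (transpose_mat (mat_of_cols k xs) * B * mat_of_cols k xs)
      | B. B \<in> carrier_mat k k \<and> transpose_mat B = B \<and> invertible_mat B}"

end

theory Submission
  imports Defs
begin

lemma fpf_involution_even:
  assumes "finite A" "\<forall>x\<in>A. f x \<in> A \<and> f x \<noteq> x \<and> f (f x) = x"
  shows "even (card A)"
  using assms
proof (induction "card A" arbitrary: A rule: less_induct)
  case less
  show ?case
  proof (cases "A = {}")
    case True then show ?thesis by simp
  next
    case False
    then obtain x where x: "x \<in> A" by blast
    define A' where "A' = A - {x, f x}"
    have fx: "f x \<in> A" "f x \<noteq> x" using less.prems x by auto
    have cA: "card A = card A' + 2"
    proof -
      have s: "{x, f x} \<subseteq> A" using fx x by auto
      have c2: "card {x, f x} = 2" using fx by simp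
      have "card A' = card A - card {x, f x}" unfolding A'_def
        using s less.prems(1) by (simp add: card_Diff_subset)
      moreover have "card {x, f x} \<le> card A" using s less.prems(1) by (rule card_mono[rotated])
      ultimately show ?thesis using c2 by simp
    qed
    have cl: "\<forall>y\<in>A'. f y \<in> A' \<and> f y \<noteq> y \<and> f (f y) = y"
    proof
      fix y assume y: "y \<in> A'"
      then have yA: "y \<in> A" and yx: "y \<noteq> x" and yfx: "y \<noteq> f x" unfolding A'_def by auto
      have P: "f y \<in> A" "f y \<noteq> y" "f (f y) = y" using less.prems(2) yA by auto
      have Px: "f (f x) = x" using less.prems(2) x by auto
      have "f y \<noteq> x" using P(3) yfx by auto
      moreover have "f y \<noteq> f x" using P(3) Px yx by metis
      ultimately show "f y \<in> A' \<and> f y \<noteq> y \<and> f (f y) = y" using P unfolding A'_def by auto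
    qed
    have fin': "finite A'" using less.prems(1) unfolding A'_def by simp
    have lt: "card A' < card A" using cA by simp
    have "even (card A')" by (rule less.hyps[OF lt fin' cl])
    then show ?thesis using cA by simp
  qed
qed

definition sqs :: "'a::times set" where "sqs = range (\<lambda>x. x * x)"

context
  fixes ty :: "'a::{finite,field} itself"
  assumes oddq: "odd (card (UNIV::'a set))"
begin

abbreviation SQ :: "'a set" where "SQ \<equiv> sqs"

lemma two_ne_zero: "(2::'a) \<noteq> 0"
proof
  assume h: "(2::'a) = 0"
  have "even (card (UNIV::'a set))"
  proof (rule fpf_involution_even[where f="\<lambda>x. x + 1"])
    show "\<forall>x\<in>UNIV. x + 1 \<in> UNIV \<and> x + 1 \<noteq> x \<and> x + 1 + 1 = (x::'a)"
    proof
      fix x :: 'a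
      have "x + 1 + 1 = x + 2" by (simp add: add.assoc)
      then show "x + 1 \<in> UNIV \<and> x + 1 \<noteq> x \<and> x + 1 + 1 = x" using h by simp
    qed
  qed simp
  then show False using oddq by simp
qed

lemma neg_ne_self: "(x::'a) \<noteq> 0 \<Longrightarrow> -x \<noteq> x"
proof
  assume nz: "x \<noteq> 0" and h: "-x = x"
  have "x + x = x + (-x)" using arg_cong[OF h, of "(+) x"] by (rule sym)
  also have "\<dots> = 0" by (rule add.right_inverse)
  finally have "x + x = 0" .
  then have "2 * x = 0" by (simp only: mult_2)
  then show False using two_ne_zero nz by simp
qed

lemma card_nonzero_squares:
  "card (UNIV::'a set) - 1 = 2 * card ((\<lambda>x::'a. x * x) ` (UNIV - {0}))"
proof -
  let ?S = "(\<lambda>x::'a. x * x) ` (UNIV - {0})"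
  have eq: "UNIV - {0::'a} = (\<Union>y\<in>?S. {x. x * x = y})" by auto
  have c2: "card {x. x * x = y} = 2" if "y \<in> ?S" for y
  proof -
    obtain s where s: "s \<noteq> 0" "y = s * s" using \<open>y \<in> ?S\<close> by auto
    have "{x. x * x = y} = {s, -s}"
    proof -
      have "x * x = s * s \<longleftrightarrow> x = s \<or> x = -s" for x :: 'a
      proof -
        have "x * x - s * s = (x - s) * (x + s)" by (simp add: algebra_simps)
        have "x * x = s * s \<longleftrightarrow> x * x - s * s = 0" by simp
        also have "\<dots> \<longleftrightarrow> x - s = 0 \<or> x + s = 0" using \<open>x * x - s * s = (x - s) * (x + s)\<close> by simp
        also have "\<dots> \<longleftrightarrow> x = s \<or> x = -s" by (simp add: eq_neg_iff_add_eq_0)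
        finally show ?thesis .
      qed
      then show ?thesis using s by auto
    qed
    moreover have ne: "s \<noteq> -s" using neg_ne_self[OF s(1)] by (rule not_sym)
    have "card {s, -s} = 2"
      by (rule card_2_iff[THEN iffD2], rule exI[of _ s], rule exI[of _ "-s"], intro conjI refl ne)
    ultimately show ?thesis by (simp only:)
  qed
  have "card (UNIV - {0::'a}) = card (\<Union>y\<in>?S. {x. x * x = y})"
    using eq by (rule arg_cong)
  also have "\<dots> = (\<Sum>y\<in>?S. card {x. x * x = y})"
    by (rule card_UN_disjoint) auto
  also have "\<dots> = (\<Sum>y\<in>?S. 2)" using c2 by simp
  finally show ?thesis by simp
qed


lemma sqs_alt: "SQ = insert 0 ((\<lambda>x::'a. x * x) ` (UNIV - {0}))"
  unfolding sqs_def by auto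

lemma card_sqs: "2 * card SQ = card (UNIV::'a set) + 1"
proof -
  have "0 \<notin> (\<lambda>x::'a. x * x) ` (UNIV - {0})" by auto
  then have "card SQ = card ((\<lambda>x::'a. x * x) ` (UNIV - {0})) + 1"
    unfolding sqs_alt by simp
  moreover have "card (UNIV::'a set) \<ge> 1" by (simp add: Suc_leI finite_UNIV_card_ge_0)
  ultimately show ?thesis using card_nonzero_squares by simp
qed

lemma binary_represents:
  assumes a: "(a::'a) \<noteq> 0" and b: "b \<noteq> 0"
  shows "\<exists>x y. a * (x * x) + b * (y * y) = c"
proof -
  let ?X = "(\<lambda>s. a * s) ` SQ" and ?Y = "(\<lambda>s. c - b * s) ` SQ"
  have cX: "card ?X = card SQ" by (rule card_image) (use a in \<open>auto simp: inj_on_def\<close>)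
  have cY: "card ?Y = card SQ" by (rule card_image) (use b in \<open>auto simp: inj_on_def\<close>)
  have "card (?X \<union> ?Y) \<le> card (UNIV::'a set)" by (rule card_mono) auto
  moreover have "card (?X \<union> ?Y) + card (?X \<inter> ?Y) = card ?X + card ?Y"
    using card_Un_Int[of ?X ?Y] by simp
  ultimately have "card (?X \<inter> ?Y) > 0" using cX cY card_sqs by linarith
  then have "?X \<inter> ?Y \<noteq> {}" by (intro notI) simp
  then obtain z where "z \<in> ?X \<inter> ?Y" by blast
  then have "z \<in> ?X" "z \<in> ?Y" by auto
  then obtain x y where "a * (x * x) = c - b * (y * y)" unfolding sqs_def by auto
  then have "a * (x * x) + b * (y * y) = c" by (simp add: algebra_simps)
  then show ?thesis by blast
qed

lemma exists_nonsquare: "\<exists>e::'a. e \<notin> SQ"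
proof -
  have "card {0::'a, 1} \<le> card (UNIV::'a set)" by (rule card_mono) auto
  then have "card (UNIV::'a set) \<ge> 2" by simp
  then have "card SQ < card (UNIV::'a set)" using card_sqs by simp
  show ?thesis
  proof (rule ccontr)
    assume "\<not> (\<exists>e::'a. e \<notin> SQ)"
    then have "SQ = UNIV" by auto
    then show False using \<open>card SQ < card (UNIV::'a set)\<close> by simp
  qed
qed

lemma square_classes:
  assumes e: "(e::'a) \<notin> SQ" and x: "x \<noteq> 0"
  shows "x \<in> SQ \<or> (\<exists>s. x = e * (s * s))"
proof (rule ccontr)
  assume h: "\<not> (x \<in> SQ \<or> (\<exists>s. x = e * (s * s)))"
  let ?S = "(\<lambda>x::'a. x * x) ` (UNIV - {0})"
  let ?N = "UNIV - SQ"
  have e0: "e \<noteq> 0" using e unfolding sqs_def by auto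
  have sub: "insert x ((\<lambda>s. e * s) ` ?S) \<subseteq> ?N"
  proof -
    have "e * s \<notin> SQ" if "s \<in> ?S" for s
    proof
      assume "e * s \<in> SQ"
      then obtain t where t: "e * s = t * t" unfolding sqs_def by auto
      obtain r where r: "r \<noteq> 0" "s = r * r" using \<open>s \<in> ?S\<close> by auto
      have "e = (t / r) * (t / r)" using t r e0 by (simp add: field_simps)
      then have "e \<in> SQ" unfolding sqs_def by (rule image_eqI) simp
      then show False using e by simp
    qed
    then show ?thesis using h by auto
  qed
  have xn: "x \<notin> (\<lambda>s. e * s) ` ?S" using h by auto
  have "card (insert x ((\<lambda>s. e * s) ` ?S)) = card ((\<lambda>s. e * s) ` ?S) + 1"
    using xn by simp
  also have "card ((\<lambda>s. e * s) ` ?S) = card ?S"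
    by (rule card_image) (use e0 in \<open>auto simp: inj_on_def\<close>)
  finally have c1: "card (insert x ((\<lambda>s. e * s) ` ?S)) = card ?S + 1" .
  have "card (insert x ((\<lambda>s. e * s) ` ?S)) \<le> card ?N" using sub by (rule card_mono[rotated]) simp
  moreover have "card ?N = card (UNIV::'a set) - card SQ" by (simp add: card_Diff_subset)
  moreover have "2 * card SQ = card (UNIV::'a set) + 1" by (rule card_sqs)
  moreover have "card (UNIV::'a set) - 1 = 2 * card ?S" by (rule card_nonzero_squares)
  ultimately show False using c1 by linarith
qed

end

definition Gr :: "'a vec list \<Rightarrow> ('a vec \<Rightarrow> 'a vec \<Rightarrow> 'a::zero) \<Rightarrow> lgraph" where
  "Gr xs \<beta> = ({0..<length xs}, \<lambda>i j. \<beta> (xs ! i) (xs ! j) \<noteq> 0)"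

definition scal :: "nat \<Rightarrow> ('a vec \<Rightarrow> 'a vec \<Rightarrow> 'a::field) \<Rightarrow> bool" where
  "scal k \<beta> \<longleftrightarrow> (\<forall>a b. \<forall>u\<in>carrier_vec k. \<forall>v\<in>carrier_vec k. \<beta> (a \<cdot>\<^sub>v u) (b \<cdot>\<^sub>v v) = a * b * \<beta> u v)"

definition rel :: "nat \<Rightarrow> ('a vec \<Rightarrow> 'a vec \<Rightarrow> 'a::field) \<Rightarrow> ('a vec \<Rightarrow> 'a vec \<Rightarrow> 'a) \<Rightarrow> bool" where
  "rel k \<beta> \<beta>' \<longleftrightarrow> (\<exists>S c. c \<noteq> 0 \<and> (\<forall>u\<in>carrier_vec k. S u \<in> carrier_vec k) \<and> inj_on S (carrier_vec k)
     \<and> (\<forall>a. \<forall>u\<in>carrier_vec k. S (a \<cdot>\<^sub>v u) = a \<cdot>\<^sub>v S u)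
     \<and> (\<forall>u\<in>carrier_vec k. \<forall>v\<in>carrier_vec k. \<beta> (S u) (S v) = c * \<beta>' u v))"

lemma lgraph_iso_refl: "lgraph_iso G G"
  unfolding lgraph_iso_def by (rule exI[of _ id]) auto

lemma lgraph_iso_sym: assumes "lgraph_iso G H" shows "lgraph_iso H G"
proof -
  obtain f where f: "bij_betw f (fst G) (fst H)"
    "\<forall>i\<in>fst G. \<forall>j\<in>fst G. snd G i j \<longleftrightarrow> snd H (f i) (f j)"
    using assms unfolding lgraph_iso_def by blast
  let ?g = "inv_into (fst G) f"
  have g: "bij_betw ?g (fst H) (fst G)" using f(1) by (rule bij_betw_inv_into)
  have "snd H i j \<longleftrightarrow> snd G (?g i) (?g j)" if "i \<in> fst H" "j \<in> fst H" for i j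
  proof -
    have gi: "?g i \<in> fst G" "?g j \<in> fst G" using g that by (auto simp: bij_betw_def)
    have fi: "f (?g i) = i" "f (?g j) = j" using f(1) that by (auto simp: bij_betw_inv_into_right)
    have "snd G (?g i) (?g j) \<longleftrightarrow> snd H (f (?g i)) (f (?g j))" using f(2) gi by blast
    then show ?thesis unfolding fi by simp
  qed
  then show ?thesis unfolding lgraph_iso_def using g by blast
qed

lemma lgraph_iso_trans: assumes "lgraph_iso G H" "lgraph_iso H K" shows "lgraph_iso G K"
proof -
  obtain f where f: "bij_betw f (fst G) (fst H)"
    "\<forall>i\<in>fst G. \<forall>j\<in>fst G. snd G i j \<longleftrightarrow> snd H (f i) (f j)"
    using assms(1) unfolding lgraph_iso_def by blast
  obtain g where g: "bij_betw g (fst H) (fst K)"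
    "\<forall>i\<in>fst H. \<forall>j\<in>fst H. snd H i j \<longleftrightarrow> snd K (g i) (g j)"
    using assms(2) unfolding lgraph_iso_def by blast
  have "bij_betw (g \<circ> f) (fst G) (fst K)" using f(1) g(1) by (rule bij_betw_trans)
  moreover have "\<forall>i\<in>fst G. \<forall>j\<in>fst G. snd G i j \<longleftrightarrow> snd K ((g \<circ> f) i) ((g \<circ> f) j)"
  proof (intro ballI)
    fix i j assume ij: "i \<in> fst G" "j \<in> fst G"
    then have fij: "f i \<in> fst H" "f j \<in> fst H" using f(1) by (auto simp: bij_betw_def)
    have "snd G i j \<longleftrightarrow> snd H (f i) (f j)" using f(2) ij by blast
    also have "\<dots> \<longleftrightarrow> snd K (g (f i)) (g (f j))" using g(2) fij by blast
    finally show "snd G i j \<longleftrightarrow> snd K ((g \<circ> f) i) ((g \<circ> f) j)" by simp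
  qed
  ultimately show ?thesis unfolding lgraph_iso_def by blast
qed

lemma lgraph_iso_count: assumes "lgraph_iso G H" "finite (fst G)"
  shows "nonlooped_count G = nonlooped_count H"
proof -
  obtain f where f: "bij_betw f (fst G) (fst H)"
    "\<forall>i\<in>fst G. \<forall>j\<in>fst G. snd G i j \<longleftrightarrow> snd H (f i) (f j)"
    using assms(1) unfolding lgraph_iso_def by blast
  have "f ` {i \<in> fst G. \<not> snd G i i} = {i \<in> fst H. \<not> snd H i i}"
  proof
    show "f ` {i \<in> fst G. \<not> snd G i i} \<subseteq> {i \<in> fst H. \<not> snd H i i}"
      using f by (auto simp: bij_betw_def)
    show "{i \<in> fst H. \<not> snd H i i} \<subseteq> f ` {i \<in> fst G. \<not> snd G i i}"
    proof
      fix i assume i: "i \<in> {i \<in> fst H. \<not> snd H i i}"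
      then obtain j where j: "j \<in> fst G" "i = f j" using f(1) by (auto simp: bij_betw_def)
      then show "i \<in> f ` {i \<in> fst G. \<not> snd G i i}" using i f(2) by auto
    qed
  qed
  moreover have "inj_on f {i \<in> fst G. \<not> snd G i i}"
    using f(1) by (auto simp: bij_betw_def inj_on_def)
  ultimately show ?thesis unfolding nonlooped_count_def using card_image by fastforce
qed

lemma carrier_vec_PiE: "carrier_vec k = (\<lambda>f. vec k f) ` (PiE {0..<k} (\<lambda>_. UNIV))"
proof
  show "carrier_vec k \<subseteq> (\<lambda>f. vec k f) ` (PiE {0..<k} (\<lambda>_. UNIV))"
  proof
    fix v assume v: "v \<in> carrier_vec k"
    have "v = vec k (restrict (\<lambda>i. v $ i) {0..<k})" using v by (intro eq_vecI) auto
    moreover have "restrict (\<lambda>i. v $ i) {0..<k} \<in> PiE {0..<k} (\<lambda>_. UNIV)" by simp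
    ultimately show "v \<in> (\<lambda>f. vec k f) ` (PiE {0..<k} (\<lambda>_. UNIV))" by blast
  qed
qed auto

lemma inj_vec_PiE: "inj_on (\<lambda>f. vec k f) (PiE {0..<k} (\<lambda>_. UNIV))"
proof
  fix f g assume f: "f \<in> PiE {0..<k} (\<lambda>_. UNIV)" and g: "g \<in> PiE {0..<k} (\<lambda>_. UNIV)"
    and e: "vec k f = vec k g"
  show "f = g"
  proof
    fix i show "f i = g i"
    proof (cases "i < k")
      case True then show ?thesis using arg_cong[OF e, of "\<lambda>v. v $ i"] by simp
    next
      case False then show ?thesis using f g by (auto simp: PiE_def extensional_def)
    qed
  qed
qed

lemma finite_carrier_vec[simp]: "finite (carrier_vec k :: 'a::finite vec set)"
  unfolding carrier_vec_PiE by (rule finite_imageI) (simp add: finite_PiE)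

lemma card_carrier_vec: "card (carrier_vec k :: 'a::finite vec set) = card (UNIV::'a set) ^ k"
  unfolding carrier_vec_PiE
  by (subst card_image[OF inj_vec_PiE]) (simp add: card_PiE)

lemma zero_smult_vec': "v \<in> carrier_vec k \<Longrightarrow> (0::'a::field) \<cdot>\<^sub>v v = 0\<^sub>v k"
  by (intro eq_vecI) auto

lemma rel_refl: "rel k \<beta> \<beta>"
  unfolding rel_def by (rule exI[of _ id], rule exI[of _ 1]) auto

lemma rel_trans: assumes "rel k \<beta> \<beta>'" "rel k \<beta>' \<beta>''" shows "rel k \<beta> \<beta>''"
proof -
  obtain S c where S: "c \<noteq> 0" "\<forall>u\<in>carrier_vec k. S u \<in> carrier_vec k" "inj_on S (carrier_vec k)"
     "\<forall>a. \<forall>u\<in>carrier_vec k. S (a \<cdot>\<^sub>v u) = a \<cdot>\<^sub>v S u"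
     "\<forall>u\<in>carrier_vec k. \<forall>v\<in>carrier_vec k. \<beta> (S u) (S v) = c * \<beta>' u v"
    using assms(1) unfolding rel_def by blast
  obtain T d where T: "d \<noteq> 0" "\<forall>u\<in>carrier_vec k. T u \<in> carrier_vec k" "inj_on T (carrier_vec k)"
     "\<forall>a. \<forall>u\<in>carrier_vec k. T (a \<cdot>\<^sub>v u) = a \<cdot>\<^sub>v T u"
     "\<forall>u\<in>carrier_vec k. \<forall>v\<in>carrier_vec k. \<beta>' (T u) (T v) = d * \<beta>'' u v"
    using assms(2) unfolding rel_def by blast
  have "c * d \<noteq> 0" using S(1) T(1) by simp
  moreover have "\<forall>u\<in>carrier_vec k. S (T u) \<in> carrier_vec k" using S(2) T(2) by blast
  moreover have "inj_on (S \<circ> T) (carrier_vec k)"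
    using S(3) T(3) T(2) by (auto simp: inj_on_def)
  moreover have "\<forall>a. \<forall>u\<in>carrier_vec k. S (T (a \<cdot>\<^sub>v u)) = a \<cdot>\<^sub>v S (T u)"
    using S(4) T(4) T(2) by simp
  moreover have "\<forall>u\<in>carrier_vec k. \<forall>v\<in>carrier_vec k. \<beta> (S (T u)) (S (T v)) = (c * d) * \<beta>'' u v"
    using S(5) T(5) T(2) by simp
  ultimately show ?thesis unfolding rel_def by (intro exI[of _ "S \<circ> T"] exI[of _ "c * d"]) simp
qed

lemma rel_sym: assumes "rel k \<beta> (\<beta>' :: 'a::{finite,field} vec \<Rightarrow> _)" shows "rel k \<beta>' \<beta>"
proof -
  let ?V = "carrier_vec k :: 'a vec set"
  obtain S c where S: "c \<noteq> 0" "\<forall>u\<in>?V. S u \<in> ?V" "inj_on S ?V"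
     "\<forall>a. \<forall>u\<in>?V. S (a \<cdot>\<^sub>v u) = a \<cdot>\<^sub>v S u"
     "\<forall>u\<in>?V. \<forall>v\<in>?V. \<beta> (S u) (S v) = c * \<beta>' u v"
    using assms(1) unfolding rel_def by blast
  have SV: "S ` ?V = ?V" by (rule endo_inj_surj) (use S in auto)
  have bij: "bij_betw S ?V ?V" using S(3) SV by (simp add: bij_betw_def)
  let ?T = "inv_into ?V S"
  have Tb: "bij_betw ?T ?V ?V" using bij by (rule bij_betw_inv_into)
  have TV: "\<forall>u\<in>?V. ?T u \<in> ?V" using Tb by (auto simp: bij_betw_def)
  have ST: "S (?T u) = u" if "u \<in> ?V" for u using bij that by (simp add: bij_betw_inv_into_right)
  have TS: "?T (S u) = u" if "u \<in> ?V" for u using S(3) that by (simp add: inv_into_f_f)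
  have Tlin: "\<forall>a. \<forall>u\<in>?V. ?T (a \<cdot>\<^sub>v u) = a \<cdot>\<^sub>v ?T u"
  proof (intro allI ballI)
    fix a u assume u: "u \<in> ?V"
    have tu: "?T u \<in> ?V" using TV u by blast
    have "S (a \<cdot>\<^sub>v ?T u) = a \<cdot>\<^sub>v u" using S(4) tu ST[OF u] by simp
    then have "?T (S (a \<cdot>\<^sub>v ?T u)) = ?T (a \<cdot>\<^sub>v u)" by simp
    then show "?T (a \<cdot>\<^sub>v u) = a \<cdot>\<^sub>v ?T u" using TS tu by simp
  qed
  have Tform: "\<forall>u\<in>?V. \<forall>v\<in>?V. \<beta>' (?T u) (?T v) = inverse c * \<beta> u v"
  proof (intro ballI)
    fix u v assume u: "u \<in> ?V" and v: "v \<in> ?V"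
    have "\<beta> (S (?T u)) (S (?T v)) = c * \<beta>' (?T u) (?T v)" using S(5) TV u v by blast
    then show "\<beta>' (?T u) (?T v) = inverse c * \<beta> u v" using ST[OF u] ST[OF v] S(1) by (simp add: field_simps)
  qed
  have "inj_on ?T ?V" using Tb by (simp add: bij_betw_def)
  then show ?thesis unfolding rel_def using S(1) TV Tlin Tform
    by (intro exI[of _ ?T] exI[of _ "inverse c"]) simp
qed

lemma rel_iso:
  assumes pr: "proj_reps k xs" and r: "rel k \<beta> \<beta>'" and sc: "scal k \<beta>"
  shows "lgraph_iso (Gr xs \<beta>') (Gr xs (\<beta> :: 'a::{finite,field} vec \<Rightarrow> _))"
proof -
  let ?V = "carrier_vec k :: 'a vec set"
  let ?n = "length xs"
  obtain S c where S: "c \<noteq> 0" "\<forall>u\<in>?V. S u \<in> ?V" "inj_on S ?V"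
     "\<forall>a. \<forall>u\<in>?V. S (a \<cdot>\<^sub>v u) = a \<cdot>\<^sub>v S u"
     "\<forall>u\<in>?V. \<forall>v\<in>?V. \<beta> (S u) (S v) = c * \<beta>' u v"
    using r unfolding rel_def by blast
  have xsV: "xs ! i \<in> ?V" "xs ! i \<noteq> 0\<^sub>v k" if "i < ?n" for i
    using pr that unfolding proj_reps_def by auto
  have uniq: "\<exists>!i. i < ?n \<and> (\<exists>c. c \<noteq> 0 \<and> v = c \<cdot>\<^sub>v (xs ! i))" if "v \<in> ?V" "v \<noteq> 0\<^sub>v k" for v
    using pr that unfolding proj_reps_def by auto
  have S0: "S (0\<^sub>v k) = 0\<^sub>v k"
  proof -
    have z: "0\<^sub>v k \<in> ?V" by simp
    have "S (0 \<cdot>\<^sub>v 0\<^sub>v k) = 0 \<cdot>\<^sub>v S (0\<^sub>v k)" using S(4) z by blast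
    then show ?thesis using zero_smult_vec'[OF z] zero_smult_vec'[of "S (0\<^sub>v k)" k] S(2) z by simp
  qed
  have Sx: "S (xs ! i) \<in> ?V" "S (xs ! i) \<noteq> 0\<^sub>v k" if "i < ?n" for i
  proof -
    show "S (xs ! i) \<in> ?V" using S(2) xsV[OF that] by blast
    show "S (xs ! i) \<noteq> 0\<^sub>v k"
    proof
      assume "S (xs ! i) = 0\<^sub>v k"
      then have "S (xs ! i) = S (0\<^sub>v k)" using S0 by simp
      then have "xs ! i = 0\<^sub>v k" using S(3) xsV[OF that] by (auto simp: inj_on_def)
      then show False using xsV[OF that] by simp
    qed
  qed
  define \<sigma> where "\<sigma> i = (THE j. j < ?n \<and> (\<exists>c. c \<noteq> 0 \<and> S (xs ! i) = c \<cdot>\<^sub>v (xs ! j)))" for i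
  have \<sigma>: "\<sigma> i < ?n \<and> (\<exists>c. c \<noteq> 0 \<and> S (xs ! i) = c \<cdot>\<^sub>v (xs ! \<sigma> i))" if "i < ?n" for i
    unfolding \<sigma>_def by (rule theI'[OF uniq[OF Sx[OF that]]])
  define \<alpha> where "\<alpha> i = (SOME c. c \<noteq> 0 \<and> S (xs ! i) = c \<cdot>\<^sub>v (xs ! \<sigma> i))" for i
  have \<alpha>: "\<alpha> i \<noteq> 0 \<and> S (xs ! i) = \<alpha> i \<cdot>\<^sub>v (xs ! \<sigma> i)" if "i < ?n" for i
    unfolding \<alpha>_def by (rule someI_ex) (use \<sigma>[OF that] in blast)
  have inj: "inj_on \<sigma> {0..<?n}"
  proof
    fix i i' assume i: "i \<in> {0..<?n}" and i': "i' \<in> {0..<?n}" and e: "\<sigma> i = \<sigma> i'"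
    let ?a = "\<alpha> i" and ?b = "\<alpha> i'"
    have a: "?a \<noteq> 0" "S (xs ! i) = ?a \<cdot>\<^sub>v (xs ! \<sigma> i)" using \<alpha> i by auto
    have b: "?b \<noteq> 0" "S (xs ! i') = ?b \<cdot>\<^sub>v (xs ! \<sigma> i)" using \<alpha> i' e by auto
    have "S ((?a / ?b) \<cdot>\<^sub>v xs ! i') = (?a / ?b) \<cdot>\<^sub>v S (xs ! i')" using S(4) xsV i' by simp
    also have "\<dots> = ?a \<cdot>\<^sub>v (xs ! \<sigma> i)" using b by (simp add: smult_smult_assoc)
    finally have "S ((?a / ?b) \<cdot>\<^sub>v xs ! i') = S (xs ! i)" using a by simp
    moreover have "(?a / ?b) \<cdot>\<^sub>v xs ! i' \<in> ?V" using xsV i' by simp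
    ultimately have eq: "xs ! i = (?a / ?b) \<cdot>\<^sub>v xs ! i'" using S(3) xsV i by (auto simp: inj_on_def)
    have "?a / ?b \<noteq> 0" using a b by simp
    then have P1: "i' < ?n \<and> (\<exists>c. c \<noteq> 0 \<and> xs ! i = c \<cdot>\<^sub>v (xs ! i'))"
      using eq i' by (intro conjI exI[of _ "?a / ?b"]) auto
    have P2: "i < ?n \<and> (\<exists>c. c \<noteq> 0 \<and> xs ! i = c \<cdot>\<^sub>v (xs ! i))"
      using i by (intro conjI exI[of _ 1]) auto
    show "i = i'" using uniq[OF xsV[of i]] P1 P2 i by auto
  qed
  have sub: "\<sigma> ` {0..<?n} \<subseteq> {0..<?n}" using \<sigma> by auto
  have bij: "bij_betw \<sigma> {0..<?n} {0..<?n}"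
    using endo_inj_surj[OF _ sub inj] inj by (simp add: bij_betw_def)
  have edge: "\<beta>' (xs ! i) (xs ! j) \<noteq> 0 \<longleftrightarrow> \<beta> (xs ! \<sigma> i) (xs ! \<sigma> j) \<noteq> 0"
    if i: "i < ?n" and j: "j < ?n" for i j
  proof -
    have "\<beta> (S (xs ! i)) (S (xs ! j)) = c * \<beta>' (xs ! i) (xs ! j)" using S(5) xsV i j by blast
    moreover have "\<beta> (S (xs ! i)) (S (xs ! j)) = \<alpha> i * \<alpha> j * \<beta> (xs ! \<sigma> i) (xs ! \<sigma> j)"
      using \<alpha>[OF i] \<alpha>[OF j] sc xsV \<sigma>[OF i] \<sigma>[OF j] unfolding scal_def by simp
    ultimately show ?thesis using S(1) \<alpha>[OF i] \<alpha>[OF j] by (metis mult_eq_0_iff)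
  qed
  show ?thesis unfolding lgraph_iso_def Gr_def using bij edge by (intro exI[of _ \<sigma>]) auto
qed

lemma smult_nonzero_vec:
  assumes "x \<in> carrier_vec k" "x \<noteq> 0\<^sub>v k" "(c::'a::field) \<noteq> 0"
  shows "c \<cdot>\<^sub>v x \<noteq> 0\<^sub>v k"
proof
  assume h: "c \<cdot>\<^sub>v x = 0\<^sub>v k"
  have "x = inverse c \<cdot>\<^sub>v (c \<cdot>\<^sub>v x)" using assms(3) by (simp add: smult_smult_assoc)
  also have "\<dots> = 0\<^sub>v k" unfolding h by (intro eq_vecI) auto
  finally show False using assms(2) by simp
qed

lemma smult_eq_self:
  assumes "x \<in> carrier_vec k" "x \<noteq> 0\<^sub>v k" "(a::'a::field) \<cdot>\<^sub>v x = x"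
  shows "a = 1"
proof -
  have "\<exists>l<k. x $ l \<noteq> 0"
  proof (rule ccontr)
    assume "\<not> (\<exists>l<k. x $ l \<noteq> 0)"
    then have "x = 0\<^sub>v k" using assms(1) by (intro eq_vecI) auto
    then show False using assms(2) by simp
  qed
  then obtain l where l: "l < k" "x $ l \<noteq> 0" by blast
  have "a * x $ l = x $ l" using arg_cong[OF assms(3), of "\<lambda>v. v $ l"] l assms(1) by simp
  then show ?thesis using l(2) by simp
qed

lemma count_formula:
  assumes pr: "proj_reps k xs" and sc: "scal k \<beta>"
  shows "nonlooped_count (Gr xs \<beta>) * (card (UNIV::'a set) - 1) + 1
     = card {v \<in> carrier_vec k. \<beta> v v = (0::'a::{finite,field})}"
proof -
  let ?V = "carrier_vec k :: 'a vec set"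
  let ?n = "length xs"
  let ?I = "{i \<in> {0..<?n}. \<beta> (xs ! i) (xs ! i) = 0}"
  let ?Z = "{v \<in> ?V. v \<noteq> 0\<^sub>v k \<and> \<beta> v v = 0}"
  let ?F = "\<lambda>(i, c). c \<cdot>\<^sub>v (xs ! i)"
  have xsV: "xs ! i \<in> ?V" "xs ! i \<noteq> 0\<^sub>v k" if "i < ?n" for i
    using pr that unfolding proj_reps_def by auto
  have uniq: "\<exists>!i. i < ?n \<and> (\<exists>c. c \<noteq> 0 \<and> v = c \<cdot>\<^sub>v (xs ! i))" if "v \<in> ?V" "v \<noteq> 0\<^sub>v k" for v
    using pr that unfolding proj_reps_def by auto
  have scv: "\<beta> (c \<cdot>\<^sub>v v) (c \<cdot>\<^sub>v v) = c * c * \<beta> v v" if "v \<in> ?V" for c v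
    using sc that unfolding scal_def by blast
  have img: "?F ` (?I \<times> (UNIV - {0})) = ?Z"
  proof
    show "?F ` (?I \<times> (UNIV - {0})) \<subseteq> ?Z"
    proof
      fix v assume "v \<in> ?F ` (?I \<times> (UNIV - {0}))"
      then obtain i c where ic: "i \<in> ?I" "c \<noteq> 0" "v = c \<cdot>\<^sub>v (xs ! i)" by auto
      then have i: "i < ?n" by simp
      show "v \<in> ?Z" using ic xsV[OF i] smult_nonzero_vec[OF xsV[OF i] ic(2)] scv[OF xsV(1)[OF i]] by auto
    qed
    show "?Z \<subseteq> ?F ` (?I \<times> (UNIV - {0}))"
    proof
      fix v assume v: "v \<in> ?Z"
      then obtain i c where ic: "i < ?n" "c \<noteq> 0" "v = c \<cdot>\<^sub>v (xs ! i)" using uniq by blast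
      have "c * c * \<beta> (xs ! i) (xs ! i) = 0" using v ic scv[OF xsV(1)[OF ic(1)]] by simp
      then have "i \<in> ?I" using ic by simp
      then show "v \<in> ?F ` (?I \<times> (UNIV - {0}))" using ic by force
    qed
  qed
  have inj: "inj_on ?F (?I \<times> (UNIV - {0}))"
  proof
    fix p p' assume p: "p \<in> ?I \<times> (UNIV - {0})" and p': "p' \<in> ?I \<times> (UNIV - {0})" and e: "?F p = ?F p'"
    obtain i c where pi: "p = (i, c)" by (cases p)
    obtain j d where pj: "p' = (j, d)" by (cases p')
    have i: "i < ?n" "c \<noteq> 0" using p pi by auto
    have j: "j < ?n" "d \<noteq> 0" using p' pj by auto
    have e2: "c \<cdot>\<^sub>v xs ! i = d \<cdot>\<^sub>v xs ! j" using e pi pj by simp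
    have "xs ! i = inverse c \<cdot>\<^sub>v (c \<cdot>\<^sub>v xs ! i)" using i by (simp add: smult_smult_assoc)
    also have "\<dots> = (inverse c * d) \<cdot>\<^sub>v xs ! j" unfolding e2 by (simp add: smult_smult_assoc)
    finally have eq: "xs ! i = (inverse c * d) \<cdot>\<^sub>v xs ! j" .
    have P1: "j < ?n \<and> (\<exists>c'. c' \<noteq> 0 \<and> xs ! i = c' \<cdot>\<^sub>v (xs ! j))"
      using eq j i by (intro conjI exI[of _ "inverse c * d"]) auto
    have P2: "i < ?n \<and> (\<exists>c'. c' \<noteq> 0 \<and> xs ! i = c' \<cdot>\<^sub>v (xs ! i))"
      using i by (intro conjI exI[of _ 1]) auto
    have ij: "i = j" using uniq[OF xsV[OF i(1)]] P1 P2 by auto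
    have "(inverse c * d) \<cdot>\<^sub>v xs ! i = xs ! i" using eq ij by simp
    then have "inverse c * d = 1" by (rule smult_eq_self[OF xsV[OF i(1)]])
    then have "c = d" using i(2) by (simp add: field_simps)
    then show "p = p'" using pi pj ij by simp
  qed
  have "card ?Z = card ?I * (card (UNIV::'a set) - 1)"
    using card_image[OF inj] img by (simp add: card_cartesian_product card_Diff_subset)
  moreover have "{v \<in> ?V. \<beta> v v = 0} = insert (0\<^sub>v k) ?Z"
  proof -
    have z: "0 \<cdot>\<^sub>v 0\<^sub>v k = (0\<^sub>v k :: 'a vec)" by (rule zero_smult_vec') simp
    have "\<beta> (0 \<cdot>\<^sub>v 0\<^sub>v k) (0 \<cdot>\<^sub>v 0\<^sub>v k) = 0" using scv[of "0\<^sub>v k" 0] by simp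
    then have "\<beta> (0\<^sub>v k) (0\<^sub>v k) = 0" unfolding z .
    then show ?thesis by auto
  qed
  moreover have "0\<^sub>v k \<notin> ?Z" by simp
  moreover have "finite ?Z" by simp
  moreover have "nonlooped_count (Gr xs \<beta>) = card ?I" unfolding nonlooped_count_def Gr_def by simp
  ultimately show ?thesis by simp
qed

definition bform :: "'a::comm_ring mat \<Rightarrow> 'a vec \<Rightarrow> 'a vec \<Rightarrow> 'a" where
  "bform B u v = u \<bullet> (B *\<^sub>v v)"

definition dform :: "nat \<Rightarrow> (nat \<Rightarrow> 'a::comm_ring) \<Rightarrow> 'a vec \<Rightarrow> 'a vec \<Rightarrow> 'a" where
  "dform n d u v = (\<Sum>i<n. d i * (u $ i) * (v $ i))"

definition diagm :: "nat \<Rightarrow> (nat \<Rightarrow> 'a::comm_ring_1) \<Rightarrow> 'a mat" where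
  "diagm n d = mat n n (\<lambda>(i, j). if i = j then d i else 0)"

lemma diagm_carrier[simp]: "diagm n d \<in> carrier_mat n n"
  unfolding diagm_def by simp

lemma diagm_dims[simp]: "dim_row (diagm n d) = n" "dim_col (diagm n d) = n"
  unfolding diagm_def by simp_all

lemma bform_scal: "B \<in> carrier_mat k k \<Longrightarrow> scal k (bform (B::'a::field mat))"
  unfolding scal_def bform_def
  by (simp add: mult_mat_vec[of B k k] ac_simps)

lemma dform_scal: "scal k (dform k (d::nat \<Rightarrow> 'a::field))"
  unfolding scal_def dform_def by (simp add: sum_distrib_left ac_simps)

lemma dform_cong: "(\<And>i. i < k \<Longrightarrow> d i = d' i) \<Longrightarrow> dform k d = dform k d'"
  unfolding dform_def by (intro ext sum.cong) auto

lemma diagm_mult_vec: "v \<in> carrier_vec n \<Longrightarrow> i < n \<Longrightarrow> (diagm n d *\<^sub>v v) $ i = d i * v $ i"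
proof -
  assume v: "v \<in> carrier_vec n" and i: "i < n"
  have "(diagm n d *\<^sub>v v) $ i = (\<Sum>j<n. (if i = j then d i else 0) * v $ j)"
    using v i unfolding diagm_def by (simp add: scalar_prod_def row_def lessThan_atLeast0)
  also have "\<dots> = (\<Sum>j<n. if j = i then d i * v $ j else 0)" by (intro sum.cong) auto
  also have "\<dots> = d i * v $ i" using i by simp
  finally show ?thesis .
qed

lemma bform_diagm: "u \<in> carrier_vec n \<Longrightarrow> v \<in> carrier_vec n \<Longrightarrow> bform (diagm n d) u v = dform n d u v"
proof -
  assume u: "u \<in> carrier_vec n" and v: "v \<in> carrier_vec n"
  have "bform (diagm n d) u v = (\<Sum>i\<in>{0..<n}. u $ i * (diagm n d *\<^sub>v v) $ i)"
    unfolding bform_def scalar_prod_def by simp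
  also have "\<dots> = (\<Sum>i\<in>{0..<n}. d i * u $ i * v $ i)"
    by (intro sum.cong refl, subst diagm_mult_vec[OF v]) (auto simp: ac_simps)
  finally show ?thesis unfolding dform_def by (simp add: lessThan_atLeast0)
qed

lemma diagm_transpose: "transpose_mat (diagm n d) = diagm n d"
  unfolding diagm_def by (intro eq_matI) auto

lemma diagm_mult: "diagm n d * diagm n e = diagm n (\<lambda>i. d i * e i)"
proof (intro eq_matI)
  fix i j assume i: "i < dim_row (diagm n (\<lambda>i. d i * e i))" and j: "j < dim_col (diagm n (\<lambda>i. d i * e i))"
  then have i': "i < n" and j': "j < n" unfolding diagm_def by auto
  have "(diagm n d * diagm n e) $$ (i, j) = (\<Sum>l<n. (if i = l then d i else 0) * (if l = j then e l else 0))"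
    using i' j' unfolding diagm_def by (simp add: scalar_prod_def row_def col_def lessThan_atLeast0)
  also have "\<dots> = (\<Sum>l<n. if l = i then (if i = j then d i * e i else 0) else 0)" by (intro sum.cong) auto
  also have "\<dots> = (if i = j then d i * e i else 0)" using i' by simp
  finally show "(diagm n d * diagm n e) $$ (i, j) = diagm n (\<lambda>i. d i * e i) $$ (i, j)"
    using i' j' unfolding diagm_def by simp
qed (auto simp: diagm_def)

lemma diagm_one: "(\<And>i. i < n \<Longrightarrow> d i = 1) \<Longrightarrow> diagm n d = 1\<^sub>m n"
  unfolding diagm_def by (intro eq_matI) auto

lemma diagm_invertible:
  assumes "\<And>i. i < n \<Longrightarrow> (d i :: 'a::field) \<noteq> 0"
  shows "invertible_mat (diagm n d)"
proof -
  have "diagm n d * diagm n (\<lambda>i. inverse (d i)) = 1\<^sub>m n"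
    unfolding diagm_mult using assms by (intro diagm_one) simp
  moreover have "diagm n (\<lambda>i. inverse (d i)) * diagm n d = 1\<^sub>m n"
    unfolding diagm_mult using assms by (intro diagm_one) simp
  ultimately show ?thesis unfolding invertible_mat_def inverts_mat_def
    by (auto simp: diagm_def square_mat.simps)
qed

lemma graph_conn:
  assumes xs: "\<forall>x\<in>set xs. x \<in> carrier_vec k" and B: "B \<in> carrier_mat k k"
  shows "lgraph_iso (looped_graph_of (transpose_mat (mat_of_cols k xs) * B * mat_of_cols k xs))
           (Gr xs (bform (B::'a::comm_ring_1 mat)))"
proof -
  let ?U = "mat_of_cols k xs"
  have U: "?U \<in> carrier_mat k (length xs)" by simp
  have UT: "transpose_mat ?U \<in> carrier_mat (length xs) k" by simp
  have eq: "transpose_mat ?U * B * ?U = transpose_mat ?U * (B * ?U)"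
    using UT B U by (rule assoc_mult_mat)
  have dims: "dim_row (transpose_mat ?U * B * ?U) = length xs" by simp
  have ent: "(transpose_mat ?U * B * ?U) $$ (i, j) = bform B (xs ! i) (xs ! j)"
    if i: "i < length xs" and j: "j < length xs" for i j
  proof -
    have "(transpose_mat ?U * B * ?U) $$ (i, j) = row (transpose_mat ?U) i \<bullet> col (B * ?U) j"
      unfolding eq using i j B by simp
    also have "\<dots> = col ?U i \<bullet> (B *\<^sub>v col ?U j)" using i j B col_mult2[OF B U j] by simp
    also have "\<dots> = bform B (xs ! i) (xs ! j)" using i j xs unfolding bform_def by simp
    finally show ?thesis .
  qed
  show ?thesis unfolding lgraph_iso_def looped_graph_of_def Gr_def
    using ent dims by (intro exI[of _ id]) auto
qed

lemma proj_reps_carrier: "proj_reps k xs \<Longrightarrow> \<forall>x\<in>set xs. x \<in> carrier_vec k"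
  unfolding proj_reps_def by auto

lemma rel_scale:
  assumes t: "(t::'a::field) \<noteq> 0"
  shows "rel k (dform k d) (dform k (\<lambda>i. t * d i))"
proof -
  have "dform k d u v = inverse t * dform k (\<lambda>i. t * d i) u v" for u v
    unfolding dform_def sum_distrib_left using t by (intro sum.cong refl) (simp add: field_simps)
  then show ?thesis unfolding rel_def using t
    by (intro exI[of _ id] exI[of _ "inverse t"]) auto
qed

lemma rel_sq:
  assumes j: "j < k" and s: "(s::'a::field) \<noteq> 0"
  shows "rel k (dform k d) (dform k (d(j := s * s * d j)))"
proof -
  define S where "S u = vec k (\<lambda>i. if i = j then s * u $ i else u $ i)" for u :: "'a vec"
  have SV: "\<forall>u\<in>carrier_vec k. S u \<in> carrier_vec k" unfolding S_def by simp
  have inj: "inj_on S (carrier_vec k)"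
  proof
    fix u v assume u: "u \<in> carrier_vec k" and v: "v \<in> carrier_vec k" and e: "S u = S v"
    show "u = v"
    proof (rule eq_vecI)
      fix i assume i: "i < dim_vec v"
      have "S u $ i = S v $ i" using e by simp
      then show "u $ i = v $ i" using i v s unfolding S_def by (auto split: if_splits)
    qed (use u v in simp)
  qed
  have lin: "\<forall>a. \<forall>u\<in>carrier_vec k. S (a \<cdot>\<^sub>v u) = a \<cdot>\<^sub>v S u"
    unfolding S_def by (auto intro!: eq_vecI simp: ac_simps)
  have form: "\<forall>u\<in>carrier_vec k. \<forall>v\<in>carrier_vec k. dform k d (S u) (S v) = 1 * dform k (d(j := s * s * d j)) u v"
    unfolding dform_def S_def by (auto intro!: sum.cong simp: ac_simps)
  show ?thesis unfolding rel_def using SV inj lin form by (intro exI[of _ S] exI[of _ 1]) auto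
qed

lemma sum_two:
  assumes "j < (k::nat)" "l < k" "j \<noteq> l"
  shows "(\<Sum>i<k. f i) = f j + f l + (\<Sum>i\<in>{..<k} - {j, l}. f i)"
proof -
  have "(\<Sum>i<k. f i) = f j + (\<Sum>i\<in>{..<k} - {j}. f i)" using assms by (intro sum.remove) auto
  also have "(\<Sum>i\<in>{..<k} - {j}. f i) = f l + (\<Sum>i\<in>{..<k} - {j} - {l}. f i)"
    using assms by (intro sum.remove) auto
  also have "{..<k} - {j} - {l} = {..<k} - {j, l}" by auto
  finally show ?thesis by (simp add: add.assoc)
qed

lemma rel_merge:
  assumes j: "j < k" and l: "l < k" and jl: "j \<noteq> l"
    and h: "d j * (x * x) + d l * (y * y) = (1::'a::field)"
  shows "rel k (dform k d) (dform k (d(j := 1, l := d j * d l)))"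
proof -
  define S where "S u = vec k (\<lambda>i. if i = j then x * u $ j - d l * y * u $ l
      else if i = l then y * u $ j + d j * x * u $ l else u $ i)" for u :: "'a vec"
  have SV: "\<forall>u\<in>carrier_vec k. S u \<in> carrier_vec k" unfolding S_def by simp
  have Sj: "S u $ j = x * u $ j - d l * y * u $ l" for u unfolding S_def using j by simp
  have Sl: "S u $ l = y * u $ j + d j * x * u $ l" for u unfolding S_def using l jl by simp
  have So: "S u $ i = u $ i" if "i < k" "i \<noteq> j" "i \<noteq> l" for u i unfolding S_def using that by simp
  have recj: "a = d j * x * (x * a - d l * y * b) + d l * y * (y * a + d j * x * b)" for a b
  proof -
    have "d j * x * (x * a - d l * y * b) + d l * y * (y * a + d j * x * b) = a * (d j * (x * x) + d l * (y * y))"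
      by (simp add: algebra_simps)
    then show ?thesis using h by simp
  qed
  have recl: "b = - y * (x * a - d l * y * b) + x * (y * a + d j * x * b)" for a b
  proof -
    have "- y * (x * a - d l * y * b) + x * (y * a + d j * x * b) = b * (d j * (x * x) + d l * (y * y))"
      by (simp add: algebra_simps)
    then show ?thesis using h by simp
  qed
  have inj: "inj_on S (carrier_vec k)"
  proof
    fix u v assume u: "u \<in> carrier_vec k" and v: "v \<in> carrier_vec k" and e: "S u = S v"
    have e1: "S u $ j = S v $ j" and e2: "S u $ l = S v $ l" using e by simp_all
    show "u = v"
    proof (rule eq_vecI)
      fix i assume i: "i < dim_vec v"
      then have ik: "i < k" using v by simp
      show "u $ i = v $ i"
      proof (cases "i = j")
        case True
        have "u $ j = v $ j" using recj[of "u $ j" "u $ l"] recj[of "v $ j" "v $ l"] e1 e2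
          unfolding Sj Sl by metis
        then show ?thesis using True by simp
      next
        case False
        show ?thesis
        proof (cases "i = l")
          case True
          have "u $ l = v $ l" using recl[of "u $ l" "u $ j"] recl[of "v $ l" "v $ j"] e1 e2
            unfolding Sj Sl by metis
          then show ?thesis using True by simp
        next
          case False
          then show ?thesis using \<open>i \<noteq> j\<close> So[OF ik] e by metis
        qed
      qed
    qed (use u v in simp)
  qed
  have lin: "\<forall>a. \<forall>u\<in>carrier_vec k. S (a \<cdot>\<^sub>v u) = a \<cdot>\<^sub>v S u"
    unfolding S_def using j l by (auto intro!: eq_vecI simp: algebra_simps)
  let ?d' = "d(j := 1, l := d j * d l)"
  have form: "dform k d (S u) (S v) = 1 * dform k ?d' u v" if u: "u \<in> carrier_vec k" and v: "v \<in> carrier_vec k" for u v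
  proof -
    have rest: "(\<Sum>i\<in>{..<k} - {j, l}. d i * S u $ i * S v $ i) = (\<Sum>i\<in>{..<k} - {j, l}. ?d' i * u $ i * v $ i)"
      by (intro sum.cong refl) (auto simp: So)
    have two: "d j * S u $ j * S v $ j + d l * S u $ l * S v $ l = ?d' j * u $ j * v $ j + ?d' l * u $ l * v $ l"
    proof -
      have "d j * S u $ j * S v $ j + d l * S u $ l * S v $ l =
         (u $ j * v $ j + d j * d l * (u $ l * v $ l)) * (d j * (x * x) + d l * (y * y))"
        unfolding Sj Sl by (simp add: algebra_simps)
      then show ?thesis using h jl by simp
    qed
    show ?thesis unfolding dform_def sum_two[OF j l jl, of "\<lambda>i. d i * S u $ i * S v $ i"]
        sum_two[OF j l jl, of "\<lambda>i. ?d' i * u $ i * v $ i"] rest two by simp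
  qed
  show ?thesis unfolding rel_def using SV inj lin form by (intro exI[of _ S] exI[of _ 1]) auto
qed

definition canon :: "nat \<Rightarrow> 'a::one \<Rightarrow> nat \<Rightarrow> 'a" where
  "canon k p = (\<lambda>i. if i = k - 1 then p else 1)"

lemma normalize:
  assumes oddq: "odd (card (UNIV::'a::{finite,field} set))"
    and k: "k \<ge> 1" and d: "\<forall>i<k. (d i :: 'a) \<noteq> 0"
  shows "rel k (dform k d) (dform k (canon k (\<Prod>i<k. d i)))"
proof -
  define D where "D r = (\<lambda>i. if i < r then 1 else if i = k - 1 then (\<Prod>i<r. d i) * d (k - 1) else d i)" for r
  have step: "rel k (dform k d) (dform k (D r))" if "r \<le> k - 1" for r
    using that
  proof (induction r)
    case 0
    have "D 0 = d" unfolding D_def by auto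
    then show ?case by (simp add: rel_refl)
  next
    case (Suc r)
    then have r: "r < k - 1" by simp
    have IH: "rel k (dform k d) (dform k (D r))" using Suc by simp
    have Dr: "D r r = d r" using r unfolding D_def by simp
    have Dl: "D r (k - 1) = (\<Prod>i<r. d i) * d (k - 1)" using r unfolding D_def by simp
    have nz1: "D r r \<noteq> 0" using Dr d r by simp
    have nz2: "D r (k - 1) \<noteq> 0" using Dl d r k by simp
    obtain x y where xy: "D r r * (x * x) + D r (k - 1) * (y * y) = 1"
      using binary_represents[OF oddq nz1 nz2] by blast
    have m: "rel k (dform k (D r)) (dform k ((D r)(r := 1, k - 1 := D r r * D r (k - 1))))"
      by (rule rel_merge[OF _ _ _ xy]) (use r in auto)
    have "(D r)(r := 1, k - 1 := D r r * D r (k - 1)) = D (Suc r)"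
    proof
      fix i
      have "(\<Prod>i<Suc r. d i) * d (k - 1) = d r * ((\<Prod>i<r. d i) * d (k - 1))" by (simp add: ac_simps)
      then show "((D r)(r := 1, k - 1 := D r r * D r (k - 1))) i = D (Suc r) i"
        unfolding Dr Dl using r unfolding D_def by auto
    qed
    then show ?case using rel_trans[OF IH m] by simp
  qed
  have "dform k (D (k - 1)) = dform k (canon k (\<Prod>i<k. d i))"
  proof (rule dform_cong)
    fix i assume i: "i < k"
    have "(\<Prod>i<k. d i) = (\<Prod>i<k - 1. d i) * d (k - 1)"
    proof -
      obtain k' where "k = Suc k'" using k by (cases k) auto
      then show ?thesis by simp
    qed
    then show "D (k - 1) i = canon k (\<Prod>i<k. d i) i" unfolding D_def canon_def using i by auto
  qed
  then show ?thesis using step[of "k - 1"] by simp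
qed

locale symform =
  fixes B :: "'a::{finite,field} mat" and k :: nat
  assumes B: "B \<in> carrier_mat k k" and symB: "transpose_mat B = B" and invB: "invertible_mat B"
begin

abbreviation V where "V \<equiv> carrier_vec k :: 'a vec set"
abbreviation \<beta> where "\<beta> \<equiv> bform B"

lemma BV[simp]: "v \<in> V \<Longrightarrow> B *\<^sub>v v \<in> V" using B by simp

lemma sym: "u \<in> V \<Longrightarrow> v \<in> V \<Longrightarrow> \<beta> u v = \<beta> v u"
proof -
  assume u: "u \<in> V" and v: "v \<in> V"
  have "(transpose_mat B *\<^sub>v u) \<bullet> v = u \<bullet> (B *\<^sub>v v)" by (rule transpose_vec_mult_scalar[OF B v u])
  then have "(B *\<^sub>v u) \<bullet> v = u \<bullet> (B *\<^sub>v v)" unfolding symB .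
  moreover have "(B *\<^sub>v u) \<bullet> v = v \<bullet> (B *\<^sub>v u)" using u v by (intro comm_scalar_prod[of _ k]) simp_all
  ultimately show ?thesis unfolding bform_def by simp
qed

lemma add_l: "u \<in> V \<Longrightarrow> v \<in> V \<Longrightarrow> w \<in> V \<Longrightarrow> \<beta> (u + v) w = \<beta> u w + \<beta> v w"
  unfolding bform_def by (rule add_scalar_prod_distrib) (use B in auto)

lemma minus_l: "u \<in> V \<Longrightarrow> v \<in> V \<Longrightarrow> w \<in> V \<Longrightarrow> \<beta> (u - v) w = \<beta> u w - \<beta> v w"
  unfolding bform_def by (rule minus_scalar_prod_distrib) (use B in auto)

lemma smult_l: "u \<in> V \<Longrightarrow> w \<in> V \<Longrightarrow> \<beta> (a \<cdot>\<^sub>v u) w = a * \<beta> u w"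
  unfolding bform_def by (rule smult_scalar_prod_distrib) (use B in auto)

lemma add_r: "u \<in> V \<Longrightarrow> v \<in> V \<Longrightarrow> w \<in> V \<Longrightarrow> \<beta> w (u + v) = \<beta> w u + \<beta> w v"
  using add_l sym by simp

lemma minus_r: "u \<in> V \<Longrightarrow> v \<in> V \<Longrightarrow> w \<in> V \<Longrightarrow> \<beta> w (u - v) = \<beta> w u - \<beta> w v"
  using minus_l sym by simp

lemma smult_r: "u \<in> V \<Longrightarrow> w \<in> V \<Longrightarrow> \<beta> w (a \<cdot>\<^sub>v u) = a * \<beta> w u"
  using smult_l sym by simp

lemma nondeg: assumes w: "w \<in> V" "w \<noteq> 0\<^sub>v k" shows "\<exists>v\<in>V. \<beta> w v \<noteq> 0"
proof -
  obtain C where C: "inverts_mat B C" "inverts_mat C B" using invB unfolding invertible_mat_def by blast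
  have BC: "B * C = 1\<^sub>m k" using C(1) B unfolding inverts_mat_def by simp
  have dC: "dim_col C = k" using arg_cong[OF BC, of dim_col] by simp
  have CB0: "C * B = 1\<^sub>m (dim_row C)" using C(2) unfolding inverts_mat_def by simp
  have dR: "dim_row C = k" using arg_cong[OF CB0, of dim_col] B by simp
  have CB: "C * B = 1\<^sub>m k" using CB0 dR by simp
  have Cc: "C \<in> carrier_mat k k" using dR dC by auto
  have "B *\<^sub>v w \<noteq> 0\<^sub>v k"
  proof
    assume h: "B *\<^sub>v w = 0\<^sub>v k"
    have "w = (C * B) *\<^sub>v w" unfolding CB using w by simp
    also have "\<dots> = C *\<^sub>v (B *\<^sub>v w)" using Cc B w by simp
    also have "\<dots> = 0\<^sub>v k" unfolding h using Cc by (intro eq_vecI) auto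
    finally show False using w by simp
  qed
  then have "\<exists>i<k. (B *\<^sub>v w) $ i \<noteq> 0"
  proof (rule contrapos_np)
    assume "\<not> (\<exists>i<k. (B *\<^sub>v w) $ i \<noteq> 0)"
    then show "B *\<^sub>v w = 0\<^sub>v k" using B by (intro eq_vecI) auto
  qed
  then obtain i where i: "i < k" "(B *\<^sub>v w) $ i \<noteq> 0" by blast
  have "\<beta> (unit_vec k i) w \<noteq> 0" unfolding bform_def using i B w by simp
  then show ?thesis using sym[of "unit_vec k i" w] w by (intro bexI[of _ "unit_vec k i"]) simp_all
qed

fun proj :: "'a vec list \<Rightarrow> 'a vec \<Rightarrow> 'a vec" where
  "proj [] v = v"
| "proj (e # es) v = proj es v - (\<beta> e (proj es v) / \<beta> e e) \<cdot>\<^sub>v e"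

fun orth :: "'a vec list \<Rightarrow> bool" where
  "orth [] = True"
| "orth (e # es) = (\<beta> e e \<noteq> 0 \<and> (\<forall>e'\<in>set es. \<beta> e e' = 0) \<and> orth es)"

lemma proj_V: "set es \<subseteq> V \<Longrightarrow> v \<in> V \<Longrightarrow> proj es v \<in> V"
  by (induction es) auto

lemma proj_orth: "set es \<subseteq> V \<Longrightarrow> orth es \<Longrightarrow> v \<in> V \<Longrightarrow> \<forall>e\<in>set es. \<beta> e (proj es v) = 0"
proof (induction es)
  case Nil then show ?case by simp
next
  case (Cons e es)
  let ?p = "proj es v"
  let ?c = "\<beta> e ?p / \<beta> e e"
  have eV: "e \<in> V" and esV: "set es \<subseteq> V" using Cons.prems by auto
  have pV: "?p \<in> V" using proj_V[OF esV Cons.prems(3)] .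
  have ee: "\<beta> e e \<noteq> 0" using Cons.prems by simp
  have IH: "\<forall>e'\<in>set es. \<beta> e' ?p = 0" using Cons by simp
  have "\<beta> e (?p - ?c \<cdot>\<^sub>v e) = \<beta> e ?p - ?c * \<beta> e e" using eV pV by (simp add: minus_r smult_r)
  also have "\<dots> = 0" using ee by simp
  finally have A: "\<beta> e (proj (e # es) v) = 0" by simp
  have "\<beta> e' (proj (e # es) v) = 0" if e': "e' \<in> set es" for e'
  proof -
    have e'V: "e' \<in> V" using e' esV by auto
    have "\<beta> e' e = \<beta> e e'" using sym[OF e'V eV] .
    also have "\<dots> = 0" using Cons.prems e' by simp
    finally have z: "\<beta> e' e = 0" .
    have "\<beta> e' (?p - ?c \<cdot>\<^sub>v e) = \<beta> e' ?p - ?c * \<beta> e' e" using eV pV e'V by (simp add: minus_r smult_r)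
    then show ?thesis using z IH e' by simp
  qed
  then show ?case using A by simp
qed

lemma proj_keep: "set es \<subseteq> V \<Longrightarrow> v \<in> V \<Longrightarrow> w \<in> V \<Longrightarrow> (\<forall>e\<in>set es. \<beta> w e = 0) \<Longrightarrow> \<beta> w (proj es v) = \<beta> w v"
proof (induction es)
  case Nil then show ?case by simp
next
  case (Cons e es)
  have eV: "e \<in> V" and esV: "set es \<subseteq> V" using Cons.prems by auto
  have pV: "proj es v \<in> V" using proj_V[OF esV Cons.prems(2)] .
  have "\<beta> w (proj (e # es) v) = \<beta> w (proj es v) - (\<beta> e (proj es v) / \<beta> e e) * \<beta> w e"
    using eV pV Cons.prems(3) by (simp add: minus_r smult_r)
  also have "\<dots> = \<beta> w (proj es v)" using Cons.prems(4) by simp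
  also have "\<dots> = \<beta> w v" using Cons by simp
  finally show ?case .
qed

lemma exists_W:
  assumes esV: "set es \<subseteq> V" and len: "length es < k"
  shows "\<exists>w\<in>V. w \<noteq> 0\<^sub>v k \<and> (\<forall>e\<in>set es. \<beta> e w = 0)"
proof -
  let ?j = "length es"
  let ?f = "\<lambda>v. restrict (\<lambda>a. \<beta> (es ! a) v) {0..<?j}"
  have q2: "card (UNIV::'a set) \<ge> 2"
  proof -
    have "card {0::'a, 1} \<le> card (UNIV::'a set)" by (rule card_mono) auto
    then show ?thesis by simp
  qed
  have "card (?f ` V) \<le> card (PiE {0..<?j} (\<lambda>_. UNIV :: 'a set))"
    by (rule card_mono) (auto simp: finite_PiE)
  also have "\<dots> = card (UNIV::'a set) ^ ?j" by (simp add: card_PiE)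
  also have "\<dots> < card (UNIV::'a set) ^ k" using q2 len by (intro power_strict_increasing) auto
  also have "\<dots> = card V" by (simp add: card_carrier_vec)
  finally have "card (?f ` V) < card V" .
  then have "\<not> inj_on ?f V" using card_image by fastforce
  then obtain u v where uv: "u \<in> V" "v \<in> V" "u \<noteq> v" "?f u = ?f v" unfolding inj_on_def by blast
  let ?w = "u - v"
  have wV: "?w \<in> V" using uv by simp
  have wnz: "?w \<noteq> 0\<^sub>v k"
  proof
    assume w0: "?w = 0\<^sub>v k"
    have "u = v"
    proof (rule eq_vecI)
      fix i assume i: "i < dim_vec v"
      have "(u - v) $ i = 0" using w0 i uv by simp
      then show "u $ i = v $ i" using i uv by simp
    qed (use uv in simp)
    then show False using uv by simp
  qed
  have "\<beta> e ?w = 0" if e: "e \<in> set es" for e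
  proof -
    obtain a where a: "a < ?j" "e = es ! a" using e by (auto simp: in_set_conv_nth)
    have "\<beta> (es ! a) u = \<beta> (es ! a) v" using fun_cong[OF uv(4), of a] a by simp
    moreover have "\<beta> e ?w = \<beta> e u - \<beta> e v" using uv esV e by (simp add: minus_r subset_iff)
    ultimately show ?thesis using a by simp
  qed
  then show ?thesis using wV wnz by blast
qed



lemma basis:
  assumes oddq: "odd (card (UNIV::'a set))"
  shows "j \<le> k \<Longrightarrow> \<exists>es. length es = j \<and> set es \<subseteq> V \<and> orth es"
proof (induction j)
  case 0 then show ?case by (intro exI[of _ "[]"]) simp
next
  case (Suc j)
  then obtain es where es: "length es = j" "set es \<subseteq> V" "orth es" by auto
  have lt: "length es < k" using es Suc.prems by simp
  obtain w0 where w0: "w0 \<in> V" "w0 \<noteq> 0\<^sub>v k" "\<forall>e\<in>set es. \<beta> e w0 = 0"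
    using exists_W[OF es(2) lt] by blast
  have w0e: "\<forall>e\<in>set es. \<beta> w0 e = 0" using w0 es(2) sym by auto
  obtain v where v: "v \<in> V" "\<beta> w0 v \<noteq> 0" using nondeg[OF w0(1,2)] by blast
  let ?v' = "proj es v"
  have v'V: "?v' \<in> V" using proj_V[OF es(2) v(1)] .
  have v'e: "\<forall>e\<in>set es. \<beta> e ?v' = 0" using proj_orth[OF es(2) es(3) v(1)] .
  have wv': "\<beta> w0 ?v' \<noteq> 0" using proj_keep[OF es(2) v(1) w0(1) w0e] v(2) by simp
  have "\<exists>w\<in>V. \<beta> w w \<noteq> 0 \<and> (\<forall>e\<in>set es. \<beta> e w = 0)"
  proof (cases "\<beta> w0 w0 = 0")
    case False then show ?thesis using w0 by blast
  next
    case z1: True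
    show ?thesis
    proof (cases "\<beta> ?v' ?v' = 0")
      case False then show ?thesis using v'V v'e by blast
    next
      case z2: True
      have "\<beta> (w0 + ?v') (w0 + ?v') = \<beta> w0 w0 + \<beta> w0 ?v' + (\<beta> ?v' w0 + \<beta> ?v' ?v')"
        using w0(1) v'V by (simp add: add_l add_r)
      also have "\<dots> = 2 * \<beta> w0 ?v'" using z1 z2 sym[OF w0(1) v'V] by simp
      finally have "\<beta> (w0 + ?v') (w0 + ?v') \<noteq> 0" using wv' two_ne_zero[OF oddq] by simp
      moreover have "\<forall>e\<in>set es. \<beta> e (w0 + ?v') = 0" using w0 v'e v'V es(2) by (auto simp: add_r)
      moreover have "w0 + ?v' \<in> V" using w0(1) v'V by simp
      ultimately show ?thesis by blast
    qed
  qed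
  then obtain w where w: "w \<in> V" "\<beta> w w \<noteq> 0" "\<forall>e\<in>set es. \<beta> e w = 0" by blast
  have "\<forall>e\<in>set es. \<beta> w e = 0" using w es(2) sym by auto
  then have "orth (w # es)" using w es by simp
  then show ?case using w es by (intro exI[of _ "w # es"]) simp
qed

lemma orth_nth:
  "orth es \<Longrightarrow> set es \<subseteq> V \<Longrightarrow> a < length es \<Longrightarrow> b < length es \<Longrightarrow>
     \<beta> (es ! a) (es ! b) = (if a = b then \<beta> (es ! a) (es ! a) else 0) \<and> \<beta> (es ! a) (es ! a) \<noteq> 0"
proof (induction es arbitrary: a b)
  case Nil then show ?case by simp
next
  case (Cons e es)
  have eV: "e \<in> V" and esV: "set es \<subseteq> V" using Cons.prems by auto
  show ?case
  proof (cases a)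
    case 0
    show ?thesis
    proof (cases b)
      case 0 then show ?thesis using \<open>a = 0\<close> Cons.prems by simp
    next
      case (Suc b')
      then have "es ! b' \<in> set es" using Cons.prems by simp
      then show ?thesis using \<open>a = 0\<close> Suc Cons.prems by simp
    qed
  next
    case (Suc a')
    show ?thesis
    proof (cases b)
      case 0
      have m: "es ! a' \<in> set es" using Suc Cons.prems by simp
      then have "\<beta> (es ! a') e = \<beta> e (es ! a')" using sym eV esV by auto
      then have "\<beta> (es ! a') e = 0" using m Cons.prems by simp
      moreover have "\<beta> (es ! a') (es ! a') \<noteq> 0" using Cons.IH[of a' a'] Cons.prems Suc by simp
      ultimately show ?thesis using Suc 0 by simp
    next
      case (Suc b')
      then show ?thesis using Cons.IH[of a' b'] Cons.prems \<open>a = Suc a'\<close> by simp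
    qed
  qed
qed

lemma congruence_entry:
  assumes xs: "set xs \<subseteq> V" and i: "i < length xs" and j: "j < length xs"
  shows "(transpose_mat (mat_of_cols k xs) * B * mat_of_cols k xs) $$ (i, j) = \<beta> (xs ! i) (xs ! j)"
proof -
  let ?U = "mat_of_cols k xs"
  have U: "?U \<in> carrier_mat k (length xs)" by simp
  have UT: "transpose_mat ?U \<in> carrier_mat (length xs) k" by simp
  have eq: "transpose_mat ?U * B * ?U = transpose_mat ?U * (B * ?U)"
    using UT B U by (rule assoc_mult_mat)
  have "(transpose_mat ?U * B * ?U) $$ (i, j) = row (transpose_mat ?U) i \<bullet> col (B * ?U) j"
    unfolding eq using i j B by simp
  also have "\<dots> = col ?U i \<bullet> (B *\<^sub>v col ?U j)" using i j B col_mult2[OF B U j] by simp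
  also have "\<dots> = \<beta> (xs ! i) (xs ! j)"
  proof -
    have "xs ! i \<in> V" "xs ! j \<in> V" using xs i j by auto
    then show ?thesis using i j unfolding bform_def by simp
  qed
  finally show ?thesis .
qed

lemma assoc3:
  assumes P: "P \<in> carrier_mat k k" and v: "v \<in> V"
  shows "(transpose_mat P * B * P) *\<^sub>v v = transpose_mat P *\<^sub>v (B *\<^sub>v (P *\<^sub>v v))"
proof -
  have PT: "transpose_mat P \<in> carrier_mat k k" using P by simp
  have PTB: "transpose_mat P * B \<in> carrier_mat k k" using PT B by simp
  have "(transpose_mat P * B * P) *\<^sub>v v = (transpose_mat P * B) *\<^sub>v (P *\<^sub>v v)"
    by (rule assoc_mult_mat_vec[OF PTB P v])
  also have "\<dots> = transpose_mat P *\<^sub>v (B *\<^sub>v (P *\<^sub>v v))"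
    by (rule assoc_mult_mat_vec[OF PT B]) (use P v in simp)
  finally show ?thesis .
qed

lemma bform_congr:
  assumes P: "P \<in> carrier_mat k k" and u: "u \<in> V" and v: "v \<in> V"
  shows "\<beta> (P *\<^sub>v u) (P *\<^sub>v v) = bform (transpose_mat P * B * P) u v"
proof -
  have PT: "transpose_mat P \<in> carrier_mat k k" using P by simp
  have "(transpose_mat P * B * P) *\<^sub>v v = transpose_mat P *\<^sub>v (B *\<^sub>v (P *\<^sub>v v))"
    by (rule assoc3[OF P v])
  then have "bform (transpose_mat P * B * P) u v = u \<bullet> (transpose_mat P *\<^sub>v (B *\<^sub>v (P *\<^sub>v v)))"
    unfolding bform_def by simp
  also have "\<dots> = (transpose_mat P *\<^sub>v (B *\<^sub>v (P *\<^sub>v v))) \<bullet> u"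
    using u P B v by (intro comm_scalar_prod[of _ k]) simp_all
  also have "\<dots> = (B *\<^sub>v (P *\<^sub>v v)) \<bullet> (P *\<^sub>v u)"
    by (rule transpose_vec_mult_scalar[OF P u]) (use B P v in simp)
  also have "\<dots> = (P *\<^sub>v u) \<bullet> (B *\<^sub>v (P *\<^sub>v v))"
    using u P B v by (intro comm_scalar_prod[of _ k]) simp_all
  finally show ?thesis unfolding bform_def by simp
qed

lemma diag_rel:
  assumes oddq: "odd (card (UNIV::'a set))"
  shows "\<exists>d. (\<forall>i<k. d i \<noteq> 0) \<and> rel k \<beta> (dform k d)"
proof -
  obtain es where es: "length es = k" "set es \<subseteq> V" "orth es" using basis[OF oddq, of k] by auto
  define d where "d i = \<beta> (es ! i) (es ! i)" for i
  let ?P = "mat_of_cols k es"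
  have P: "?P \<in> carrier_mat k k" using es(1) mat_of_cols_carrier(1)[of k es] by simp
  have M: "transpose_mat ?P * B * ?P = diagm k d"
  proof (rule eq_matI)
    fix i j assume i: "i < dim_row (diagm k d)" and j: "j < dim_col (diagm k d)"
    then have i': "i < length es" and j': "j < length es" using es by simp_all
    show "(transpose_mat ?P * B * ?P) $$ (i, j) = diagm k d $$ (i, j)"
      unfolding congruence_entry[OF es(2) i' j'] using orth_nth[OF es(3) es(2) i' j'] i j
      unfolding diagm_def d_def by simp
  qed (use es B in simp_all)
  have dnz: "\<forall>i<k. d i \<noteq> 0" using orth_nth[OF es(3) es(2)] es(1) unfolding d_def by blast
  have SV: "\<forall>u\<in>V. ?P *\<^sub>v u \<in> V" using P by simp
  have form: "\<forall>u\<in>V. \<forall>v\<in>V. \<beta> (?P *\<^sub>v u) (?P *\<^sub>v v) = 1 * dform k d u v"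
  proof (intro ballI)
    fix u v assume u: "u \<in> V" and v: "v \<in> V"
    have "\<beta> (?P *\<^sub>v u) (?P *\<^sub>v v) = bform (diagm k d) u v" using bform_congr[OF P u v] M by simp
    also have "\<dots> = dform k d u v" by (rule bform_diagm[OF u v])
    finally show "\<beta> (?P *\<^sub>v u) (?P *\<^sub>v v) = 1 * dform k d u v" by simp
  qed
  have lin: "\<forall>a. \<forall>u\<in>V. ?P *\<^sub>v (a \<cdot>\<^sub>v u) = a \<cdot>\<^sub>v (?P *\<^sub>v u)"
    using P by (auto intro: mult_mat_vec)
  have inj: "inj_on (\<lambda>u. ?P *\<^sub>v u) V"
  proof
    fix u v assume u: "u \<in> V" and v: "v \<in> V" and e: "?P *\<^sub>v u = ?P *\<^sub>v v"
    have "(transpose_mat ?P * B * ?P) *\<^sub>v u = transpose_mat ?P *\<^sub>v (B *\<^sub>v (?P *\<^sub>v u))"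
      by (rule assoc3[OF P u])
    also have "\<dots> = transpose_mat ?P *\<^sub>v (B *\<^sub>v (?P *\<^sub>v v))" unfolding e ..
    also have "\<dots> = (transpose_mat ?P * B * ?P) *\<^sub>v v" by (rule assoc3[OF P v, symmetric])
    finally have e2: "diagm k d *\<^sub>v u = diagm k d *\<^sub>v v" unfolding M .
    show "u = v"
    proof (rule eq_vecI)
      fix i assume i: "i < dim_vec v"
      then have ik: "i < k" using v by simp
      have "d i * u $ i = d i * v $ i"
        using arg_cong[OF e2, of "\<lambda>w. w $ i"] diagm_mult_vec[OF u ik] diagm_mult_vec[OF v ik] by simp
      then show "u $ i = v $ i" using dnz ik by simp
    qed (use u v in simp)
  qed
  have "rel k \<beta> (dform k d)" unfolding rel_def using SV inj lin form
    by (intro exI[of _ "\<lambda>u. ?P *\<^sub>v u"] exI[of _ 1]) simp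
  then show ?thesis using dnz by blast
qed

end

definition Fn :: "nat \<Rightarrow> (nat \<Rightarrow> 'a::zero) set" where
  "Fn n = {f. \<forall>i\<ge>n. f i = 0}"

definition Qf :: "nat \<Rightarrow> (nat \<Rightarrow> 'a::comm_ring) \<Rightarrow> (nat \<Rightarrow> 'a) \<Rightarrow> 'a" where
  "Qf n d f = (\<Sum>i<n. d i * f i * f i)"

definition Zf :: "nat \<Rightarrow> (nat \<Rightarrow> 'a::comm_ring) \<Rightarrow> nat" where
  "Zf n d = card {f \<in> Fn n. Qf n d f = 0}"

lemma Fn_PiE: "Fn n = (\<lambda>f. \<lambda>i. if i < n then f i else 0) ` (PiE {0..<n} (\<lambda>_. UNIV))"
proof
  show "Fn n \<subseteq> (\<lambda>f. \<lambda>i. if i < n then f i else 0) ` (PiE {0..<n} (\<lambda>_. UNIV))"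
  proof
    fix f assume f: "f \<in> Fn n"
    have "f = (\<lambda>i. if i < n then (restrict f {0..<n}) i else 0)" using f unfolding Fn_def by auto
    then show "f \<in> (\<lambda>f. \<lambda>i. if i < n then f i else 0) ` (PiE {0..<n} (\<lambda>_. UNIV))" by force
  qed
qed (auto simp: Fn_def)

lemma card_Fn: "card (Fn n :: (nat \<Rightarrow> 'a::{finite,zero}) set) = card (UNIV::'a set) ^ n"
proof -
  have "inj_on (\<lambda>f. \<lambda>i. if i < n then f i else (0::'a)) (PiE {0..<n} (\<lambda>_. UNIV))"
  proof
    fix f g :: "nat \<Rightarrow> 'a" assume f: "f \<in> PiE {0..<n} (\<lambda>_. UNIV)" and g: "g \<in> PiE {0..<n} (\<lambda>_. UNIV)"
      and e: "(\<lambda>i. if i < n then f i else 0) = (\<lambda>i. if i < n then g i else 0)"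
    show "f = g"
    proof
      fix i show "f i = g i"
      proof (cases "i < n")
        case True then show ?thesis using fun_cong[OF e, of i] by simp
      next
        case False then show ?thesis using f g by (auto simp: PiE_def extensional_def)
      qed
    qed
  qed
  then show ?thesis unfolding Fn_PiE by (simp add: card_image card_PiE)
qed

lemma finite_Fn[simp]: "finite (Fn n :: (nat \<Rightarrow> 'a::{finite,zero}) set)"
  unfolding Fn_PiE by (rule finite_imageI) (simp add: finite_PiE)

lemma Zf_vec: "card {v \<in> carrier_vec n. dform n d v v = 0} = Zf n (d :: nat \<Rightarrow> 'a::{finite,field})"
proof -
  have inj: "inj_on (\<lambda>f. vec n f) (Fn n :: (nat \<Rightarrow> 'a) set)"
  proof
    fix f g :: "nat \<Rightarrow> 'a" assume f: "f \<in> Fn n" and g: "g \<in> Fn n" and e: "vec n f = vec n g"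
    show "f = g"
    proof
      fix i show "f i = g i"
      proof (cases "i < n")
        case True then show ?thesis using arg_cong[OF e, of "\<lambda>v. v $ i"] by simp
      next
        case False then show ?thesis using f g by (auto simp: Fn_def)
      qed
    qed
  qed
  have img: "(\<lambda>f. vec n f) ` {f \<in> Fn n. Qf n d f = 0} = {v \<in> carrier_vec n. dform n d v v = 0}"
  proof
    show "(\<lambda>f. vec n f) ` {f \<in> Fn n. Qf n d f = 0} \<subseteq> {v \<in> carrier_vec n. dform n d v v = 0}"
      by (auto simp: dform_def Qf_def)
    show "{v \<in> carrier_vec n. dform n d v v = 0} \<subseteq> (\<lambda>f. vec n f) ` {f \<in> Fn n. Qf n d f = 0}"
    proof
      fix v assume v: "v \<in> {v \<in> carrier_vec n. dform n d v v = 0}"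
      let ?f = "\<lambda>i. if i < n then v $ i else 0"
      have "v = vec n ?f" using v by (intro eq_vecI) auto
      moreover have "?f \<in> Fn n" unfolding Fn_def by simp
      moreover have "Qf n d ?f = 0" using v unfolding Qf_def dform_def by simp
      ultimately show "v \<in> (\<lambda>f. vec n f) ` {f \<in> Fn n. Qf n d f = 0}" by blast
    qed
  qed
  have "card {f \<in> Fn n. Qf n d f = 0} = card ((\<lambda>f. vec n f) ` {f \<in> Fn n. Qf n d f = 0})"
    by (rule card_image[symmetric]) (rule inj_on_subset[OF inj], auto)
  then show ?thesis unfolding img Zf_def by simp
qed

lemma Qf_Suc2: "Qf (Suc (Suc n)) d f = Qf n d f + d n * f n * f n + d (Suc n) * f (Suc n) * f (Suc n)"
  unfolding Qf_def by (simp add: add.assoc)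

lemma Qf_cong: "(\<And>i. i < n \<Longrightarrow> f i = g i) \<Longrightarrow> Qf n d f = Qf n d g"
  unfolding Qf_def by (intro sum.cong) auto

context
  fixes ty :: "'a::{finite,field} itself"
  assumes oddq: "odd (card (UNIV::'a set))"
begin

lemma Zf_step:
  assumes d1: "d n = (1::'a)" and d2: "d (Suc n) = -1"
  shows "Zf (Suc (Suc n)) d + card (UNIV::'a set) ^ n
       = card (UNIV::'a set) * Zf n d + card (UNIV::'a set) ^ Suc n"
proof -
  let ?q = "card (UNIV::'a set)"
  let ?A = "{f \<in> Fn (Suc (Suc n)). Qf (Suc (Suc n)) d f = 0}"
  let ?T = "{(g, u, w). g \<in> Fn n \<and> Qf n d g + u * w = (0::'a)}"
  let ?r = "\<lambda>f::nat \<Rightarrow> 'a. \<lambda>i. if i < n then f i else 0"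
  let ?\<phi> = "\<lambda>f. (?r f, f n + f (Suc n), f n - f (Suc n))"
  define \<psi> where "\<psi> t = (case t of (g, u, w) \<Rightarrow> (g::nat \<Rightarrow> 'a)(n := (u + w) / 2, Suc n := (u - w) / 2))" for t :: "(nat \<Rightarrow> 'a) \<times> 'a \<times> 'a"
  have \<psi>: "\<psi> (g, u, w) = g(n := (u + w) / 2, Suc n := (u - w) / 2)" for g u w unfolding \<psi>_def by simp
  have two: "(2::'a) \<noteq> 0" by (rule two_ne_zero[OF oddq])
  have f22: "(2::'a) * 2 \<noteq> 0" by (rule no_zero_divisors[OF two two])
  have four: "(4::'a) \<noteq> 0" using f22 by simp
  have Qr: "Qf n d (?r f) = Qf n d f" for f by (rule Qf_cong) simp
  have sq: "(a + b) * (a - b) = a * a - b * b" for a b :: 'a by (simp add: algebra_simps)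
  have bij: "bij_betw ?\<phi> ?A ?T"
  proof (rule bij_betw_byWitness[where f'="\<psi>"])
    show "\<forall>a\<in>?A. \<psi> (?\<phi> a) = a"
    proof
      fix f assume f: "f \<in> ?A"
      show "\<psi> (?\<phi> f) = f"
      proof
        fix i
        show "\<psi> (?\<phi> f) i = f i"
        proof -
          have e: "\<psi> (?\<phi> f) = (?r f)(n := (f n + f (Suc n) + (f n - f (Suc n))) / 2, Suc n := (f n + f (Suc n) - (f n - f (Suc n))) / 2)" by (rule \<psi>)
          have "(f n + f (Suc n) + (f n - f (Suc n))) / 2 = f n" using two by (simp add: field_simps)
          moreover have "(f n + f (Suc n) - (f n - f (Suc n))) / 2 = f (Suc n)" using two by (simp add: field_simps)
          moreover have "i \<ge> Suc (Suc n) \<Longrightarrow> f i = 0" using f unfolding Fn_def by auto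
          ultimately show ?thesis unfolding e by auto
        qed
      qed
    qed
    show "\<forall>a'\<in>?T. ?\<phi> (\<psi> a') = a'"
    proof
      fix t assume t: "t \<in> ?T"
      obtain g u w where gt: "t = (g, u, w)" by (cases t)
      have g: "g \<in> Fn n" using t gt by simp
      have "?r (g(n := (u + w) / 2, Suc n := (u - w) / 2)) = g"
        using g unfolding Fn_def by (auto simp: fun_eq_iff)
      moreover have "(u + w) / 2 + (u - w) / 2 = u" using two by (simp add: field_simps)
      moreover have "(u + w) / 2 - (u - w) / 2 = w"
      proof -
        have a: "2 * ((u + w) / 2) = u + w" using two by simp
        have b: "2 * ((u - w) / 2) = u - w" using two by simp
        have "2 * ((u + w) / 2 - (u - w) / 2) = 2 * ((u + w) / 2) - 2 * ((u - w) / 2)" by (rule right_diff_distrib)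
        also have "\<dots> = (u + w) - (u - w)" unfolding a b ..
        also have "\<dots> = 2 * w" by simp
        finally show ?thesis using mult_left_cancel[OF two] by blast
      qed
      ultimately show "?\<phi> (\<psi> t) = t" unfolding gt \<psi> by simp
    qed
    show "?\<phi> ` ?A \<subseteq> ?T"
    proof
      fix t assume "t \<in> ?\<phi> ` ?A"
      then obtain f where f: "f \<in> ?A" "t = ?\<phi> f" by blast
      have "?r f \<in> Fn n" unfolding Fn_def by simp
      moreover have "Qf n d (?r f) + (f n + f (Suc n)) * (f n - f (Suc n)) = 0"
      proof -
        have e: "Qf (Suc (Suc n)) d f = Qf n d f + (f n + f (Suc n)) * (f n - f (Suc n))"
          unfolding Qf_Suc2 d1 d2 sq by (simp add: algebra_simps)
        have "Qf (Suc (Suc n)) d f = 0" using f(1) by simp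
        then show ?thesis unfolding Qr e .
      qed
      ultimately show "t \<in> ?T" using f(2) by simp
    qed
    show "\<psi> ` ?T \<subseteq> ?A"
    proof
      fix f assume "f \<in> \<psi> ` ?T"
      then obtain g u w where t: "(g, u, w) \<in> ?T" "f = g(n := (u + w) / 2, Suc n := (u - w) / 2)" by (auto simp: \<psi>_def)
      have g: "g \<in> Fn n" and Q: "Qf n d g + u * w = 0" using t by auto
      have fF: "f \<in> Fn (Suc (Suc n))" using g t(2) unfolding Fn_def by auto
      have Qfg: "Qf n d f = Qf n d g" by (rule Qf_cong) (use t(2) in auto)
      have fn: "f n = (u + w) / 2" "f (Suc n) = (u - w) / 2" using t(2) by simp_all
      have uw: "(u + w) / 2 * ((u + w) / 2) - (u - w) / 2 * ((u - w) / 2) = u * w"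
      proof -
        have "(u + w) / 2 * ((u + w) / 2) - (u - w) / 2 * ((u - w) / 2) = ((u + w) * (u + w) - (u - w) * (u - w)) / (2 * 2)"
          by (simp add: field_simps)
        also have "(u + w) * (u + w) - (u - w) * (u - w) = (2 * 2) * (u * w)" by (simp add: algebra_simps)
        finally show ?thesis using four by simp
      qed
      have "Qf (Suc (Suc n)) d f = Qf n d f + ((u + w) / 2 * ((u + w) / 2) - (u - w) / 2 * ((u - w) / 2))"
        unfolding Qf_Suc2 d1 d2 fn by (simp add: add_diff_eq) (simp add: algebra_simps)
      also have "\<dots> = 0" unfolding Qfg uw by (rule Q)
      finally show "f \<in> ?A" using fF by simp
    qed
  qed
  have cA: "card ?A = card ?T" using bij by (rule bij_betw_same_card)
  let ?Ta = "{(g, u, w::'a). g \<in> Fn n \<and> Qf n d g = 0 \<and> u = (0::'a)}"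
  let ?Tb = "{(g, u, w). g \<in> Fn n \<and> u \<noteq> 0 \<and> w = - Qf n d g / (u::'a)}"
  have Tsplit: "?T = ?Ta \<union> ?Tb"
  proof
    show "?T \<subseteq> ?Ta \<union> ?Tb"
    proof
      fix t assume t: "t \<in> ?T"
      obtain g u w where gt: "t = (g, u, w)" by (cases t)
      show "t \<in> ?Ta \<union> ?Tb"
      proof (cases "u = 0")
        case True then show ?thesis using t gt by simp
      next
        case False
        then have "w = - Qf n d g / u" using t gt by (simp add: field_simps add_eq_0_iff2)
        then show ?thesis using t gt False by simp
      qed
    qed
    show "?Ta \<union> ?Tb \<subseteq> ?T"
    proof
      fix t assume t: "t \<in> ?Ta \<union> ?Tb"
      obtain g u w where gt: "t = (g, u, w)" by (cases t)
      show "t \<in> ?T"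
      proof (cases "u = 0")
        case True then show ?thesis using t gt by auto
      next
        case False
        then have w: "w = - Qf n d g / u" and g: "g \<in> Fn n" using t gt by auto
        have "u * w = - Qf n d g" unfolding w using False by simp
        then have "Qf n d g + u * w = 0" by simp
        then show ?thesis using gt g by simp
      qed
    qed
  qed
  have disj: "?Ta \<inter> ?Tb = {}" by auto
  have fin: "finite ?Ta" "finite ?Tb"
  proof -
    have "?Ta \<subseteq> Fn n \<times> UNIV" "?Tb \<subseteq> Fn n \<times> UNIV" by auto
    then show "finite ?Ta" "finite ?Tb" by (auto intro: finite_subset)
  qed
  have c0: "card ?Ta = Zf n d * ?q"
  proof -
    have "bij_betw (\<lambda>(g, w). (g, 0, w)) ({f \<in> Fn n. Qf n d f = 0} \<times> UNIV) ?Ta"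
      by (rule bij_betw_byWitness[where f'="\<lambda>(g, u, w). (g, w)"]) auto
    then have "card ?Ta = card ({f \<in> Fn n. Qf n d f = 0} \<times> (UNIV::'a set))" by (simp add: bij_betw_same_card)
    then show ?thesis unfolding Zf_def by (simp add: card_cartesian_product)
  qed
  have c1: "card ?Tb = ?q ^ n * (?q - 1)"
  proof -
    have "bij_betw (\<lambda>(g, u). (g, u, - Qf n d g / u)) (Fn n \<times> (UNIV - {0})) ?Tb"
      by (rule bij_betw_byWitness[where f'="\<lambda>(g, u, w). (g, u)"]) auto
    then have "card (Fn n \<times> (UNIV - {0::'a}) :: ((nat \<Rightarrow> 'a) \<times> 'a) set) = card ?Tb" by (rule bij_betw_same_card)
    then have "card ?Tb = card (Fn n \<times> (UNIV - {0::'a}) :: ((nat \<Rightarrow> 'a) \<times> 'a) set)" by (rule sym)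
    then show ?thesis by (simp add: card_cartesian_product card_Fn card_Diff_subset)
  qed
  have q1: "?q \<ge> 1" by (simp add: Suc_leI finite_UNIV_card_ge_0)
  have "Zf (Suc (Suc n)) d = card ?A" unfolding Zf_def by simp
  also have "\<dots> = card ?T" by (rule cA)
  also have "\<dots> = card (?Ta \<union> ?Tb)" unfolding Tsplit ..
  also have "\<dots> = card ?Ta + card ?Tb" by (rule card_Un_disjoint[OF fin disj])
  finally have "Zf (Suc (Suc n)) d = Zf n d * ?q + ?q ^ n * (?q - 1)" using c0 c1 by simp
  moreover have "?q ^ n * (?q - 1) + ?q ^ n = ?q ^ Suc n"
  proof -
    have "?q ^ n * (?q - 1) + ?q ^ n = ?q ^ n * (?q - 1 + 1)" by (simp add: algebra_simps)
    also have "?q - 1 + 1 = ?q" using q1 by simp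
    finally show ?thesis by (simp add: mult.commute)
  qed
  ultimately show ?thesis by (simp add: ac_simps)
qed

end

definition dh :: "nat \<Rightarrow> 'a::comm_ring_1" where "dh i = (if even i then 1 else -1)"
definition da :: "'a::comm_ring_1 \<Rightarrow> nat \<Rightarrow> 'a" where "da \<eta> i = (if i = 1 then - \<eta> else if even i then 1 else -1)"
definition dod :: "'a::comm_ring_1 \<Rightarrow> nat \<Rightarrow> 'a" where "dod e i = (if i = 0 then e else if odd i then 1 else -1)"

lemma Fn0: "Fn 0 = {\<lambda>_. 0}" unfolding Fn_def by auto

lemma Zf0: "Zf 0 d = 1"
  unfolding Zf_def Fn0 Qf_def by simp

lemma Zf1: assumes "d 0 \<noteq> (0::'a::field)" shows "Zf 1 d = 1"
proof -
  have "{f \<in> Fn 1. Qf 1 d f = 0} = {\<lambda>_. (0::'a)}"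
  proof
    show "{f \<in> Fn 1. Qf 1 d f = 0} \<subseteq> {\<lambda>_. 0}"
    proof
      fix f assume f: "f \<in> {f \<in> Fn 1. Qf 1 d f = 0}"
      then have "d 0 * f 0 * f 0 = 0" unfolding Qf_def by simp
      then have f0: "f 0 = 0" using assms by simp
      have fi: "\<forall>i\<ge>1. f i = 0" using f unfolding Fn_def by simp
      have "f = (\<lambda>_. 0)"
      proof
        fix i show "f i = 0" using f0 fi by (cases i) auto
      qed
      then show "f \<in> {\<lambda>_. 0}" by simp
    qed
  qed (auto simp: Fn_def Qf_def)
  then show ?thesis unfolding Zf_def by simp
qed

lemma Zf2_aniso:
  assumes e: "(\<eta>::'a::{finite,field}) \<notin> sqs"
  shows "Zf 2 (da \<eta>) = 1"
proof -
  have "{f \<in> Fn 2. Qf 2 (da \<eta>) f = 0} = {\<lambda>_. (0::'a)}"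
  proof
    show "{f \<in> Fn 2. Qf 2 (da \<eta>) f = 0} \<subseteq> {\<lambda>_. 0}"
    proof
      fix f assume f: "f \<in> {f \<in> Fn 2. Qf 2 (da \<eta>) f = 0}"
      then have Q: "f 0 * f 0 - \<eta> * (f 1 * f 1) = 0"
        unfolding Qf_def da_def by (simp add: numeral_2_eq_2)
      have f1: "f 1 = 0"
      proof (rule ccontr)
        assume h: "f 1 \<noteq> 0"
        have "\<eta> = (f 0 / f 1) * (f 0 / f 1)" using Q h by (simp add: field_simps)
        then have "\<eta> \<in> sqs" unfolding sqs_def by (rule image_eqI) simp
        then show False using e by simp
      qed
      then have f0: "f 0 = 0" using Q by simp
      have fi: "\<forall>i\<ge>2. f i = 0" using f unfolding Fn_def by simp
      have "f = (\<lambda>_. 0)"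
      proof
        fix i show "f i = 0"
        proof (cases "i \<ge> 2")
          case True then show ?thesis using fi by simp
        next
          case False then have "i = 0 \<or> i = 1" by auto
          then show ?thesis using f0 f1 by auto
        qed
      qed
      then show "f \<in> {\<lambda>_. 0}" by simp
    qed
  qed (auto simp: Fn_def Qf_def)
  then show ?thesis unfolding Zf_def by simp
qed

lemma Zf_hyp:
  assumes oddq: "odd (card (UNIV::'a::{finite,field} set))"
  shows "real (Zf (2 * m + 2) (dh :: nat \<Rightarrow> 'a)) =
     real (card (UNIV::'a set)) ^ (2 * m + 1) + real (card (UNIV::'a set)) ^ (m + 1) - real (card (UNIV::'a set)) ^ m"
proof (induction m)
  case 0
  have "Zf (Suc (Suc 0)) (dh :: nat \<Rightarrow> 'a) + card (UNIV::'a set) ^ 0 = card (UNIV::'a set) * Zf 0 (dh :: nat \<Rightarrow> 'a) + card (UNIV::'a set) ^ Suc 0"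
    by (rule Zf_step[OF oddq]) (simp_all add: dh_def)
  then have h: "Zf 2 (dh :: nat \<Rightarrow> 'a) + 1 = card (UNIV::'a set) + card (UNIV::'a set)"
    unfolding Zf0 numeral_2_eq_2 by simp
  have "real (Zf 2 (dh :: nat \<Rightarrow> 'a)) + 1 = real (card (UNIV::'a set)) + real (card (UNIV::'a set))"
    using arg_cong[OF h, of "of_nat :: nat \<Rightarrow> real"] by (simp only: of_nat_add of_nat_1)
  then show ?case by (simp add: numeral_2_eq_2)
next
  case (Suc m)
  let ?r = "real (card (UNIV::'a set))"
  have "Zf (Suc (Suc (2 * m + 2))) (dh :: nat \<Rightarrow> 'a) + card (UNIV::'a set) ^ (2 * m + 2) = card (UNIV::'a set) * Zf (2 * m + 2) (dh :: nat \<Rightarrow> 'a) + card (UNIV::'a set) ^ Suc (2 * m + 2)"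
    by (rule Zf_step[OF oddq]) (simp_all add: dh_def)
  then have h: "Zf (2 * Suc m + 2) (dh :: nat \<Rightarrow> 'a) + card (UNIV::'a set) ^ (2 * m + 2) = card (UNIV::'a set) * Zf (2 * m + 2) (dh :: nat \<Rightarrow> 'a) + card (UNIV::'a set) ^ Suc (2 * m + 2)"
    by (simp add: numeral_2_eq_2)
  have "real (Zf (2 * Suc m + 2) (dh :: nat \<Rightarrow> 'a)) + ?r ^ (2 * m + 2) = ?r * real (Zf (2 * m + 2) (dh :: nat \<Rightarrow> 'a)) + ?r ^ Suc (2 * m + 2)"
    using arg_cong[OF h, of "of_nat :: nat \<Rightarrow> real"] by (simp only: of_nat_add of_nat_mult of_nat_power)
  then show ?case unfolding Suc.IH by (simp add: algebra_simps power_add)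
qed


lemma Zf_aniso:
  assumes oddq: "odd (card (UNIV::'a::{finite,field} set))" and e: "(\<eta>::'a) \<notin> sqs"
  shows "real (Zf (2 * m + 2) (da \<eta>)) =
     real (card (UNIV::'a set)) ^ (2 * m + 1) - real (card (UNIV::'a set)) ^ (m + 1) + real (card (UNIV::'a set)) ^ m"
proof (induction m)
  case 0
  show ?case using Zf2_aniso[OF e] by (simp add: numeral_2_eq_2)
next
  case (Suc m)
  let ?r = "real (card (UNIV::'a set))"
  have "Zf (Suc (Suc (2 * m + 2))) (da \<eta>) + card (UNIV::'a set) ^ (2 * m + 2) = card (UNIV::'a set) * Zf (2 * m + 2) (da \<eta>) + card (UNIV::'a set) ^ Suc (2 * m + 2)"
    by (rule Zf_step[OF oddq]) (simp_all add: da_def)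
  then have h: "Zf (2 * Suc m + 2) (da \<eta>) + card (UNIV::'a set) ^ (2 * m + 2) = card (UNIV::'a set) * Zf (2 * m + 2) (da \<eta>) + card (UNIV::'a set) ^ Suc (2 * m + 2)"
    by (simp add: numeral_2_eq_2)
  have "real (Zf (2 * Suc m + 2) (da \<eta>)) + ?r ^ (2 * m + 2) = ?r * real (Zf (2 * m + 2) (da \<eta>)) + ?r ^ Suc (2 * m + 2)"
    using arg_cong[OF h, of "of_nat :: nat \<Rightarrow> real"] by (simp only: of_nat_add of_nat_mult of_nat_power)
  then show ?case unfolding Suc.IH by (simp add: algebra_simps power_add)
qed

lemma Zf_odd:
  assumes oddq: "odd (card (UNIV::'a::{finite,field} set))" and e: "(e::'a) \<noteq> 0"
  shows "real (Zf (2 * m + 1) (dod e)) = real (card (UNIV::'a set)) ^ (2 * m)"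
proof (induction m)
  case 0
  have "dod e 0 \<noteq> 0" using e by (simp add: dod_def)
  then show ?case using Zf1[of "dod e"] by simp
next
  case (Suc m)
  let ?r = "real (card (UNIV::'a set))"
  have "Zf (Suc (Suc (2 * m + 1))) (dod e) + card (UNIV::'a set) ^ (2 * m + 1) = card (UNIV::'a set) * Zf (2 * m + 1) (dod e) + card (UNIV::'a set) ^ Suc (2 * m + 1)"
    by (rule Zf_step[OF oddq]) (simp_all add: dod_def)
  then have h: "Zf (2 * Suc m + 1) (dod e) + card (UNIV::'a set) ^ (2 * m + 1) = card (UNIV::'a set) * Zf (2 * m + 1) (dod e) + card (UNIV::'a set) ^ Suc (2 * m + 1)"
    by (simp add: numeral_2_eq_2)
  have "real (Zf (2 * Suc m + 1) (dod e)) + ?r ^ (2 * m + 1) = ?r * real (Zf (2 * m + 1) (dod e)) + ?r ^ Suc (2 * m + 1)"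
    using arg_cong[OF h, of "of_nat :: nat \<Rightarrow> real"] by (simp only: of_nat_add of_nat_mult of_nat_power)
  then show ?case unfolding Suc.IH by (simp add: algebra_simps power_add)
qed

lemma prod_pairs:
  assumes "\<And>j. j \<ge> a \<Longrightarrow> d (2 * j) = 1 \<and> d (2 * j + 1) = -1"
  shows "(\<Prod>i<2 * (a + m). (d i :: 'a::comm_ring_1)) = (\<Prod>i<2 * a. d i) * (-1) ^ m"
proof (induction m)
  case 0 then show ?case by simp
next
  case (Suc m)
  have "2 * (a + Suc m) = Suc (Suc (2 * (a + m)))" by simp
  then have "(\<Prod>i<2 * (a + Suc m). d i) = (\<Prod>i<2 * (a + m). d i) * d (2 * (a + m)) * d (2 * (a + m) + 1)"
    by (simp add: ac_simps)
  also have "\<dots> = (\<Prod>i<2 * (a + m). d i) * (-1)" using assms[of "a + m"] by simp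
  finally show ?case using Suc.IH by simp
qed

lemma prod_dh: "(\<Prod>i<2 * m. (dh i :: 'a::comm_ring_1)) = (-1) ^ m"
  using prod_pairs[of 0 "dh :: nat \<Rightarrow> 'a" m] by (simp add: dh_def)

lemma prod_da: "(\<Prod>i<2 * (Suc m). (da \<eta> i :: 'a::comm_ring_1)) = - \<eta> * (-1) ^ m"
proof -
  have "(\<Prod>i<2 * (1 + m). (da \<eta> i :: 'a)) = (\<Prod>i<2 * 1. da \<eta> i) * (-1) ^ m"
    by (rule prod_pairs) (auto simp: da_def)
  moreover have "(\<Prod>i<2 * 1. (da \<eta> i :: 'a)) = - \<eta>" by (simp add: da_def numeral_2_eq_2)
  ultimately show ?thesis by simp
qed

lemma prod_dod: "(\<Prod>i<2 * m + 1. (dod e i :: 'a::comm_ring_1)) = e * (-1) ^ m"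
proof -
  have "(\<Prod>i<Suc (2 * m). (dod e i :: 'a)) = dod e 0 * (\<Prod>i<2 * m. dod e (Suc i))"
    by (rule prod.lessThan_Suc_shift)
  moreover have "(\<Prod>i<2 * (0 + m). (dod e (Suc i) :: 'a)) = (\<Prod>i<2 * 0. dod e (Suc i)) * (-1) ^ m"
    by (rule prod_pairs) (auto simp: dod_def)
  ultimately show ?thesis by (simp add: dod_def)
qed

lemma rel_dform_bform: "rel k (dform k d) (bform (diagm k d))"
  unfolding rel_def
  by (intro exI[of _ id] exI[of _ 1]) (auto simp: bform_diagm)

lemma count_diag:
  assumes pr: "proj_reps k xs"
  shows "nonlooped_count (looped_graph_of (transpose_mat (mat_of_cols k xs) * diagm k d * mat_of_cols k xs))
           * (card (UNIV::'a set) - 1) + 1 = Zf k (d :: nat \<Rightarrow> 'a::{finite,field})"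
proof -
  let ?G = "looped_graph_of (transpose_mat (mat_of_cols k xs) * diagm k d * mat_of_cols k xs)"
  have iso: "lgraph_iso ?G (Gr xs (bform (diagm k d)))"
    by (rule graph_conn[OF proj_reps_carrier[OF pr]]) simp
  have "nonlooped_count ?G = nonlooped_count (Gr xs (bform (diagm k d)))"
    by (rule lgraph_iso_count[OF iso]) (simp add: looped_graph_of_def)
  moreover have "nonlooped_count (Gr xs (bform (diagm k d))) * (card (UNIV::'a set) - 1) + 1
      = card {v \<in> carrier_vec k. bform (diagm k d) v v = 0}"
    by (rule count_formula[OF pr bform_scal]) simp
  moreover have "{v \<in> carrier_vec k. bform (diagm k d) v v = 0} = {v \<in> carrier_vec k. dform k d v v = 0}"
    by (auto simp: bform_diagm)
  ultimately show ?thesis using Zf_vec by simp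
qed

lemma real_count:
  assumes "c * (q - 1) + 1 = (Z::nat)" "q \<ge> 2"
  shows "real c = (real Z - 1) / (real q - 1)"
proof -
  have "real (c * (q - 1) + 1) = real Z" using assms(1) by simp
  then have "real c * (real q - 1) + 1 = real Z" using assms(2) by (simp add: of_nat_diff)
  then show ?thesis using assms(2) by (simp add: field_simps)
qed

lemma diag_in_gk:
  assumes "\<forall>i<k. (d i :: 'a::field) \<noteq> 0"
  shows "looped_graph_of (transpose_mat (mat_of_cols k xs) * diagm k d * mat_of_cols k xs) \<in> gk_graphs k xs"
proof -
  have "diagm k d \<in> carrier_mat k k \<and> transpose_mat (diagm k d) = diagm k d \<and> invertible_mat (diagm k d)"
    using assms by (simp add: diagm_transpose diagm_invertible)
  then show ?thesis unfolding gk_graphs_def by blast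
qed

lemma class_iso:
  assumes pr: "proj_reps k xs" and B: "B \<in> carrier_mat k k"
    and r: "rel k (bform B) (dform k (d :: nat \<Rightarrow> 'a::{finite,field}))"
  shows "lgraph_iso (looped_graph_of (transpose_mat (mat_of_cols k xs) * B * mat_of_cols k xs))
           (looped_graph_of (transpose_mat (mat_of_cols k xs) * diagm k d * mat_of_cols k xs))"
proof -
  have xs: "\<forall>x\<in>set xs. x \<in> carrier_vec k" by (rule proj_reps_carrier[OF pr])
  have r2: "rel k (bform B) (bform (diagm k d))"
    by (rule rel_trans[OF r rel_dform_bform])
  have i1: "lgraph_iso (looped_graph_of (transpose_mat (mat_of_cols k xs) * B * mat_of_cols k xs)) (Gr xs (bform B))"
    by (rule graph_conn[OF xs B])
  have i2: "lgraph_iso (Gr xs (bform (diagm k d))) (Gr xs (bform B))"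
    by (rule rel_iso[OF pr r2 bform_scal[OF B]])
  have i3: "lgraph_iso (looped_graph_of (transpose_mat (mat_of_cols k xs) * diagm k d * mat_of_cols k xs)) (Gr xs (bform (diagm k d)))"
    by (rule graph_conn[OF xs]) simp
  show ?thesis
    by (rule lgraph_iso_trans[OF i1 lgraph_iso_trans[OF lgraph_iso_sym[OF i2] lgraph_iso_sym[OF i3]]])
qed

lemma canon_sq:
  assumes k: "k \<ge> 1" and t: "(t::'a::field) \<noteq> 0"
  shows "rel k (dform k (canon k a)) (dform k (canon k (a * (t * t))))"
proof -
  have "rel k (dform k (canon k a)) (dform k ((canon k a)(k - 1 := t * t * canon k a (k - 1))))"
    by (rule rel_sq) (use k t in auto)
  moreover have "(canon k a)(k - 1 := t * t * canon k a (k - 1)) = canon k (a * (t * t))"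
    unfolding canon_def by (auto simp: ac_simps)
  ultimately show ?thesis by simp
qed

lemma card_ge2: "card (UNIV::'a::{finite,field} set) \<ge> 2"
proof -
  have "card {0::'a, 1} \<le> card (UNIV::'a set)" by (rule card_mono) auto
  then show ?thesis by simp
qed

lemma neg1_pow_sq: "((-1::'a::comm_ring_1) ^ m) * ((-1) ^ m) = 1"
  by (simp add: power_mult_distrib[symmetric])

lemma dh_nz: "\<forall>i<k. (dh i :: 'a::field) \<noteq> 0" by (simp add: dh_def)
lemma da_nz: "(\<eta>::'a::field) \<noteq> 0 \<Longrightarrow> \<forall>i<k. da \<eta> i \<noteq> 0" by (simp add: da_def)
lemma dod_nz: "(e::'a::field) \<noteq> 0 \<Longrightarrow> \<forall>i<k. dod e i \<noteq> 0" by (simp add: dod_def)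

lemma reduce_even:
  assumes oddq: "odd (card (UNIV::'a::{finite,field} set))"
    and B: "(B::'a mat) \<in> carrier_mat k k" "transpose_mat B = B" "invertible_mat B"
    and k: "k = 2 * Suc m" and e: "\<eta> \<notin> sqs"
  shows "rel k (bform B) (dform k dh) \<or> rel k (bform B) (dform k (da \<eta>))"
proof -
  interpret symform B k using B by unfold_locales
  obtain d where d: "\<forall>i<k. d i \<noteq> 0" "rel k (bform B) (dform k d)" using diag_rel[OF oddq] by blast
  define p where "p = (\<Prod>i<k. d i)"
  have p0: "p \<noteq> 0" unfolding p_def using d(1) by simp
  have k1: "k \<ge> 1" using k by simp
  have r1: "rel k (bform B) (dform k (canon k p))"
    unfolding p_def by (rule rel_trans[OF d(2) normalize[OF oddq k1 d(1)]])
  define \<epsilon> where "\<epsilon> = ((-1::'a) ^ Suc m)"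
  have ee: "\<epsilon> * \<epsilon> = 1" unfolding \<epsilon>_def by (rule neg1_pow_sq)
  have e0: "\<epsilon> \<noteq> 0" using ee by auto
  have x0: "p * \<epsilon> \<noteq> 0" using p0 e0 by simp
  have \<eta>0: "\<eta> \<noteq> 0" using e unfolding sqs_def by (metis mult_zero_left rangeI)
  show ?thesis
  proof (cases "p * \<epsilon> \<in> sqs")
    case True
    then obtain s where s: "p * \<epsilon> = s * s" unfolding sqs_def by auto
    have s0: "s \<noteq> 0" using s x0 by auto
    have ps: "\<epsilon> * (s * s) = p" using s ee by (metis mult.assoc mult.commute mult_1_right)
    have n1: "rel k (dform k (dh :: nat \<Rightarrow> 'a)) (dform k (canon k \<epsilon>))"
    proof -
      have "rel k (dform k (dh :: nat \<Rightarrow> 'a)) (dform k (canon k (\<Prod>i<k. dh i)))" by (rule normalize[OF oddq k1 dh_nz])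
      moreover have "(\<Prod>i<k. (dh i :: 'a)) = \<epsilon>" unfolding k \<epsilon>_def by (rule prod_dh)
      ultimately show ?thesis by simp
    qed
    have n2: "rel k (dform k (canon k \<epsilon>)) (dform k (canon k p))"
      using canon_sq[OF k1 s0, of \<epsilon>] ps by simp
    have "rel k (bform B) (dform k dh)"
      by (rule rel_trans[OF r1 rel_sym[OF rel_trans[OF n1 n2]]])
    then show ?thesis by blast
  next
    case False
    then obtain t where t: "p * \<epsilon> = \<eta> * (t * t)" using square_classes[OF oddq e x0] by blast
    have t0: "t \<noteq> 0" using t x0 by auto
    have pt: "(\<eta> * \<epsilon>) * (t * t) = p"
    proof -
      have "(\<eta> * \<epsilon>) * (t * t) = (\<eta> * (t * t)) * \<epsilon>" by (simp add: ac_simps)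
      also have "\<dots> = p * (\<epsilon> * \<epsilon>)" unfolding t[symmetric] by (simp add: ac_simps)
      finally show ?thesis using ee by simp
    qed
    have n1: "rel k (dform k (da \<eta>)) (dform k (canon k (\<eta> * \<epsilon>)))"
    proof -
      have "rel k (dform k (da \<eta>)) (dform k (canon k (\<Prod>i<k. da \<eta> i)))" by (rule normalize[OF oddq k1 da_nz[OF \<eta>0]])
      moreover have "(\<Prod>i<k. (da \<eta> i :: 'a)) = \<eta> * \<epsilon>" unfolding k \<epsilon>_def prod_da by simp
      ultimately show ?thesis by simp
    qed
    have n2: "rel k (dform k (canon k (\<eta> * \<epsilon>))) (dform k (canon k p))"
      using canon_sq[OF k1 t0, of "\<eta> * \<epsilon>"] pt by simp
    have "rel k (bform B) (dform k (da \<eta>))"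
      by (rule rel_trans[OF r1 rel_sym[OF rel_trans[OF n1 n2]]])
    then show ?thesis by blast
  qed
qed

lemma reduce_odd:
  assumes oddq: "odd (card (UNIV::'a::{finite,field} set))"
    and B: "(B::'a mat) \<in> carrier_mat k k" "transpose_mat B = B" "invertible_mat B"
    and k: "k = 2 * m + 1"
  shows "rel k (bform B) (dform k (dod ((-1) ^ m)))"
proof -
  interpret symform B k using B by unfold_locales
  obtain d where d: "\<forall>i<k. d i \<noteq> 0" "rel k (bform B) (dform k d)" using diag_rel[OF oddq] by blast
  define p where "p = (\<Prod>i<k. d i)"
  have p0: "p \<noteq> 0" unfolding p_def using d(1) by simp
  have k1: "k \<ge> 1" using k by simp
  have pd: "\<forall>i<k. p * d i \<noteq> 0" using p0 d(1) by simp
  have r1: "rel k (bform B) (dform k (\<lambda>i. p * d i))" by (rule rel_trans[OF d(2) rel_scale[OF p0]])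
  have r2: "rel k (dform k (\<lambda>i. p * d i)) (dform k (canon k (\<Prod>i<k. p * d i)))"
    by (rule normalize[OF oddq k1 pd])
  define t where "t = p ^ Suc m"
  have t0: "t \<noteq> 0" unfolding t_def using p0 by simp
  have pr: "(\<Prod>i<k. p * d i) = 1 * (t * t)"
  proof -
    have "(\<Prod>i<k. p * d i) = p ^ k * p" unfolding p_def by (simp add: prod.distrib)
    also have "\<dots> = t * t" unfolding t_def k by (simp add: power_add[symmetric] mult_2)
    finally show ?thesis by simp
  qed
  define \<epsilon> where "\<epsilon> = ((-1::'a) ^ m)"
  have ee: "\<epsilon> * \<epsilon> = 1" unfolding \<epsilon>_def by (rule neg1_pow_sq)
  have e0: "\<epsilon> \<noteq> 0" using ee by auto
  have n1: "rel k (dform k (dod \<epsilon>)) (dform k (canon k 1))"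
  proof -
    have "rel k (dform k (dod \<epsilon>)) (dform k (canon k (\<Prod>i<k. dod \<epsilon> i)))" by (rule normalize[OF oddq k1 dod_nz[OF e0]])
    moreover have "(\<Prod>i<k. (dod \<epsilon> i :: 'a)) = 1" unfolding k prod_dod using ee unfolding \<epsilon>_def by simp
    ultimately show ?thesis by simp
  qed
  have n2: "rel k (dform k (canon k 1)) (dform k (canon k (t * t)))" using canon_sq[OF k1 t0, of 1] by simp
  have r2': "rel k (dform k (\<lambda>i. p * d i)) (dform k (canon k (t * t)))" using r2 pr by simp
  have "rel k (bform B) (dform k (dod \<epsilon>))"
    by (rule rel_trans[OF rel_trans[OF r1 r2'] rel_sym[OF rel_trans[OF n1 n2]]])
  then show ?thesis unfolding \<epsilon>_def .
qed

theorem mainTheorem15: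
  fixes xs :: "'a::{finite,field} vec list" and k :: nat
  defines "q \<equiv> card (UNIV :: 'a set)"
  assumes "odd q" and "proj_reps k xs"
  shows "(\<forall>m. k = 2 * m \<and> m \<ge> 1 \<longrightarrow>
            (\<exists>G1 G2. G1 \<in> gk_graphs k xs \<and> G2 \<in> gk_graphs k xs \<and> \<not> lgraph_iso G1 G2 \<and>
               (\<forall>G\<in>gk_graphs k xs. lgraph_iso G G1 \<or> lgraph_iso G G2) \<and>
               real (nonlooped_count G1) = (real q ^ m - 1) * (real q ^ (m - 1) + 1) / (real q - 1) \<and>
               real (nonlooped_count G2) = (real q ^ m + 1) * (real q ^ (m - 1) - 1) / (real q - 1)))
       \<and> (\<forall>m. k = 2 * m + 1 \<longrightarrow>
            (\<exists>G1\<in>gk_graphs k xs. (\<forall>G\<in>gk_graphs k xs. lgraph_iso G G1) \<and>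
               real (nonlooped_count G1) = (real q ^ (2 * m) - 1) / (real q - 1)))"
proof -
  have oddq: "odd (card (UNIV :: 'a set))" using assms(2) unfolding q_def .
  have pr: "proj_reps k xs" by (rule assms(3))
  have q2: "q \<ge> 2" unfolding q_def by (rule card_ge2)
  let ?r = "real q"
  let ?LG = "\<lambda>D. looped_graph_of (transpose_mat (mat_of_cols k xs) * D * mat_of_cols k xs)"
  have gk_B: "\<exists>B. G = ?LG B \<and> B \<in> carrier_mat k k \<and> transpose_mat B = B \<and> invertible_mat B"
    if "G \<in> gk_graphs k xs" for G using that unfolding gk_graphs_def by blast
  have fin: "finite (fst (?LG D))" for D by (simp add: looped_graph_of_def)
  have part1: "\<exists>G1 G2. G1 \<in> gk_graphs k xs \<and> G2 \<in> gk_graphs k xs \<and> \<not> lgraph_iso G1 G2 \<and>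
               (\<forall>G\<in>gk_graphs k xs. lgraph_iso G G1 \<or> lgraph_iso G G2) \<and>
               real (nonlooped_count G1) = (real q ^ m - 1) * (real q ^ (m - 1) + 1) / (real q - 1) \<and>
               real (nonlooped_count G2) = (real q ^ m + 1) * (real q ^ (m - 1) - 1) / (real q - 1)"
    if km: "k = 2 * m" "m \<ge> 1" for m
  proof -
    obtain m' where m': "m = Suc m'" using km(2) by (cases m) auto
    have k: "k = 2 * Suc m'" using km m' by simp
    have k2: "k = 2 * m' + 2" using k by simp
    obtain \<eta> :: 'a where e: "\<eta> \<notin> sqs" using exists_nonsquare[OF oddq] by blast
    have \<eta>0: "\<eta> \<noteq> 0" using e unfolding sqs_def by (metis mult_zero_left rangeI)
    define G1 where "G1 = ?LG (diagm k (dh :: nat \<Rightarrow> 'a))"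
    define G2 where "G2 = ?LG (diagm k (da \<eta>))"
    have G1in: "G1 \<in> gk_graphs k xs" unfolding G1_def by (rule diag_in_gk[OF dh_nz])
    have G2in: "G2 \<in> gk_graphs k xs" unfolding G2_def by (rule diag_in_gk[OF da_nz[OF \<eta>0]])
    have c1: "nonlooped_count G1 * (q - 1) + 1 = Zf k (dh :: nat \<Rightarrow> 'a)"
      unfolding G1_def q_def by (rule count_diag[OF pr])
    have c2: "nonlooped_count G2 * (q - 1) + 1 = Zf k (da \<eta>)"
      unfolding G2_def q_def by (rule count_diag[OF pr])
    have Z1: "real (Zf k (dh :: nat \<Rightarrow> 'a)) = ?r ^ (2 * m' + 1) + ?r ^ (m' + 1) - ?r ^ m'"
      unfolding k2 q_def by (rule Zf_hyp[OF oddq])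
    have Z2: "real (Zf k (da \<eta>)) = ?r ^ (2 * m' + 1) - ?r ^ (m' + 1) + ?r ^ m'"
      unfolding k2 q_def by (rule Zf_aniso[OF oddq e])
    have pw: "?r ^ (2 * m' + 1) = ?r ^ Suc m' * ?r ^ m'" by (simp add: power_add[symmetric] mult_2)
    have R1: "real (nonlooped_count G1) = (?r ^ m - 1) * (?r ^ (m - 1) + 1) / (?r - 1)"
    proof -
      have "real (nonlooped_count G1) = (real (Zf k (dh :: nat \<Rightarrow> 'a)) - 1) / (?r - 1)"
        by (rule real_count[OF c1 q2])
      also have "real (Zf k (dh :: nat \<Rightarrow> 'a)) - 1 = (?r ^ m - 1) * (?r ^ (m - 1) + 1)"
        unfolding Z1 m' pw by (simp add: algebra_simps)
      finally show ?thesis .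
    qed
    have R2: "real (nonlooped_count G2) = (?r ^ m + 1) * (?r ^ (m - 1) - 1) / (?r - 1)"
    proof -
      have "real (nonlooped_count G2) = (real (Zf k (da \<eta>)) - 1) / (?r - 1)"
        by (rule real_count[OF c2 q2])
      also have "real (Zf k (da \<eta>)) - 1 = (?r ^ m + 1) * (?r ^ (m - 1) - 1)"
        unfolding Z2 m' pw by (simp add: algebra_simps)
      finally show ?thesis .
    qed
    have niso: "\<not> lgraph_iso G1 G2"
    proof
      assume "lgraph_iso G1 G2"
      then have "nonlooped_count G1 = nonlooped_count G2" using lgraph_iso_count fin unfolding G1_def by blast
      then have "Zf k (dh :: nat \<Rightarrow> 'a) = Zf k (da \<eta>)" using c1 c2 by simp
      then have "real (Zf k (dh :: nat \<Rightarrow> 'a)) = real (Zf k (da \<eta>))" by simp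
      then have "2 * (?r ^ m' * (?r - 1)) = 0" unfolding Z1 Z2 by (simp add: algebra_simps)
      moreover have "?r ^ m' * (?r - 1) > 0" using q2 by simp
      ultimately show False using q2 by simp
    qed
    have all: "\<forall>G\<in>gk_graphs k xs. lgraph_iso G G1 \<or> lgraph_iso G G2"
    proof
      fix G assume "G \<in> gk_graphs k xs"
      then obtain B where B: "G = ?LG B" "B \<in> carrier_mat k k" "transpose_mat B = B" "invertible_mat B"
        using gk_B by blast
      have "rel k (bform B) (dform k dh) \<or> rel k (bform B) (dform k (da \<eta>))"
        by (rule reduce_even[OF oddq B(2-4) k e])
      then show "lgraph_iso G G1 \<or> lgraph_iso G G2"
        unfolding B(1) G1_def G2_def using class_iso[OF pr B(2)] by blast
    qed
    show ?thesis using G1in G2in niso all R1 R2 by blast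
  qed
  have part2: "\<exists>G1\<in>gk_graphs k xs. (\<forall>G\<in>gk_graphs k xs. lgraph_iso G G1) \<and>
               real (nonlooped_count G1) = (real q ^ (2 * m) - 1) / (real q - 1)"
    if k: "k = 2 * m + 1" for m
  proof -
    define \<epsilon> where "\<epsilon> = ((-1::'a) ^ m)"
    have e0: "\<epsilon> \<noteq> 0" unfolding \<epsilon>_def by simp
    define G1 where "G1 = ?LG (diagm k (dod \<epsilon>))"
    have G1in: "G1 \<in> gk_graphs k xs" unfolding G1_def by (rule diag_in_gk[OF dod_nz[OF e0]])
    have c1: "nonlooped_count G1 * (q - 1) + 1 = Zf k (dod \<epsilon>)"
      unfolding G1_def q_def by (rule count_diag[OF pr])
    have Z1: "real (Zf k (dod \<epsilon>)) = ?r ^ (2 * m)"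
      unfolding k q_def by (rule Zf_odd[OF oddq e0])
    have R1: "real (nonlooped_count G1) = (?r ^ (2 * m) - 1) / (?r - 1)"
      using real_count[OF c1 q2] Z1 by simp
    have all: "\<forall>G\<in>gk_graphs k xs. lgraph_iso G G1"
    proof
      fix G assume "G \<in> gk_graphs k xs"
      then obtain B where B: "G = ?LG B" "B \<in> carrier_mat k k" "transpose_mat B = B" "invertible_mat B"
        using gk_B by blast
      have "rel k (bform B) (dform k (dod \<epsilon>))"
        unfolding \<epsilon>_def by (rule reduce_odd[OF oddq B(2-4) k])
      then show "lgraph_iso G G1" unfolding B(1) G1_def by (rule class_iso[OF pr B(2)])
    qed
    show ?thesis using G1in all R1 by blast
  qed
  show ?thesis using part1 part2 by blast
qed

end
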